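(* Let $(\mathcal A,\mathbb E)$ be a $B$-valued probability space and $a\in\mathcal A$ with $\mathbb E(a)\in B^\times$. Then $$U_a:=S_a^{-1}\cdot I\cdot S_a=(K^a\cdot I)\circ(I\cdot K^a)^{\circ-1}=(M^a\cdot I)\circ(I\cdot M^a)^{\circ-1}.$$
   Context: $B$ is a unital algebra over a field $\mathbb K$ of characteristic zero. $\mathrm{Mult}[[B]]$: sequences $f=(f_n)_{n\ge0}$ of multilinear maps $f_n:B^n\to B$. Product $(f\cdot g)_n(x_1,\dots,x_n)=\sum_{k=0}^n f_k(x_1,\dots,x_k)g_{n-k}(x_{k+1},\dots,x_n)$, $h^{-1}$ multiplicative inverse; for $g_0=0$, composition $(f\circ g)_n(x_1,\dots,x_n)=\sum_{l\ge0}\sum_{k_1+\dots+k_l=n,k_i\ge1}f_l(g_{k_1}(x_1,\dots,x_{k_1}),\dots,g_{k_l}(x_{n-k_l+1},\dots,x_n))$, $f^{\circ-1}$ compositional inverse; $I=(\delta_{n,1}\mathrm{id}_B)$. For $f=I\cdot F$ with $F_0\in B^\times$, the S-transform $S_f$ is defined by $f^{\circ-1}=I\cdot S_f$. $B$-valued probability space $(\mathcal A,\mathbb E)$: $\mathcal A$ a unital $\mathbb K$-algebra and $B$-bimodule with all mixed triple products associative; $\mathbb E:\mathcal A\to B$ linear, unital, $\mathbb E(xay)=x\mathbb E(a)y$. Cumulants: with planar binary trees $Y_0=\{|\}$, $Y_n=\{\sigma\vee\tau:|\sigma|+|\tau|=n-1\}$, each $\tau\in Y_n$ ($n\ge1$)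 uniquely $\tau_1\vee(\tau_2\vee(\cdots\vee(\tau_k\vee|)))$, $j_i=|\tau_1|+\dots+|\tau_i|+i$, multilinear $\kappa_n:\mathcal A^n\to B$ are defined by $\mathbb E(a_1\cdots a_n)=\sum_{\tau\in Y_n}\kappa_\tau(a_1,\dots,a_n)$ with $\kappa_|=1$, $\kappa_\tau(a_1,\dots,a_n)=\kappa_k(\kappa_{\tau_1}(a_1,\dots,a_{j_1-1})a_{j_1},\dots,\kappa_{\tau_k}(a_{j_{k-1}+1},\dots,a_{j_k-1})a_{j_k})$. For $a\in\mathcal A$: moment series $M^a_n(x_1,\dots,x_n)=\mathbb E(ax_1ax_2a\cdots x_na)$; $K^a_n(x_1,\dots,x_n)=\kappa_{n+1}(a,x_1a,\dots,x_na)$; $k^a=I\cdot K^a$, i.e. $k^a_n(x_1,\dots,x_n)=\kappa_n(x_1a,\dots,x_na)$; $S_a:=S_{k^a}$. *)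

theory Defs
  imports Main
begin

text \<open>The field K is a type 'k of class field_char_0; a K-algebra structure on a
unital ring is given by an explicit scalar multiplication s.\<close>

definition kalg :: "('k::field \<Rightarrow> 'b::ring_1 \<Rightarrow> 'b) \<Rightarrow> bool" where
  "kalg s \<longleftrightarrow>
     (\<forall>c x y. s c (x + y) = s c x + s c y) \<and>
     (\<forall>c d x. s (c + d) x = s c x + s d x) \<and>
     (\<forall>c d x. s (c * d) x = s c (s d x)) \<and>
     (\<forall>x. s 1 x = x) \<and>
     (\<forall>c x y. s c (x * y) = s c x * y \<and> s c (x * y) = x * s c y)"

definition bunit :: "'b::ring_1 \<Rightarrow> bool" where
  "bunit x \<longleftrightarrow> (\<exists>y. x * y = 1 \<and> y * x = 1)"

text \<open>la = left action of B on A, ra = right action of A by B.\<close>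

definition bprob_space ::
  "('k::field_char_0 \<Rightarrow> 'b::ring_1 \<Rightarrow> 'b) \<Rightarrow> ('k \<Rightarrow> 'a::ring_1 \<Rightarrow> 'a) \<Rightarrow>
   ('b \<Rightarrow> 'a \<Rightarrow> 'a) \<Rightarrow> ('a \<Rightarrow> 'b \<Rightarrow> 'a) \<Rightarrow> ('a \<Rightarrow> 'b) \<Rightarrow> bool" where
  "bprob_space sB sA la ra E \<longleftrightarrow>
     kalg sB \<and> kalg sA \<and>
     \<comment> \<open>bimodule, K-bilinear, unital\<close>
     (\<forall>x y a. la (x + y) a = la x a + la y a) \<and>
     (\<forall>x a b. la x (a + b) = la x a + la x b) \<and>
     (\<forall>a b x. ra (a + b) x = ra a x + ra b x) \<and>
     (\<forall>a x y. ra a (x + y) = ra a x + ra a y) \<and>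
     (\<forall>c x a. la (sB c x) a = sA c (la x a) \<and> la x (sA c a) = sA c (la x a)) \<and>
     (\<forall>c x a. ra a (sB c x) = sA c (ra a x) \<and> ra (sA c a) x = sA c (ra a x)) \<and>
     (\<forall>a. la 1 a = a) \<and> (\<forall>a. ra a 1 = a) \<and>
     \<comment> \<open>all mixed triple products associative\<close>
     (\<forall>x y a. la (x * y) a = la x (la y a)) \<and>
     (\<forall>x y a. ra a (x * y) = ra (ra a x) y) \<and>
     (\<forall>x y a. ra (la x a) y = la x (ra a y)) \<and>
     (\<forall>x a b. la x (a * b) = la x a * b) \<and>
     (\<forall>x a b. ra (a * b) x = a * ra b x) \<and>
     (\<forall>x a b. ra a x * b = a * la x b) \<and>
     \<comment> \<open>the conditional expectation\<close>
     (\<forall>a b. E (a + b) = E a + E b) \<and>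
     (\<forall>c a. E (sA c a) = sB c (E a)) \<and>
     E 1 = 1 \<and>
     (\<forall>x a y. E (la x (ra a y)) = x * E a * y)"

section \<open>Mult[[B]]: a sequence (f_n) of maps B^n \<rightarrow> B is a function on lists, f_n(x1..xn) = f [x1,..,xn]\<close>

definition mlin :: "('k::field \<Rightarrow> 'b::ring_1 \<Rightarrow> 'b) \<Rightarrow> ('b list \<Rightarrow> 'b) \<Rightarrow> bool" where
  "mlin sB f \<longleftrightarrow>
     (\<forall>xs ys x y. f (xs @ (x + y) # ys) = f (xs @ x # ys) + f (xs @ y # ys)) \<and>
     (\<forall>xs ys c x. f (xs @ sB c x # ys) = sB c (f (xs @ x # ys)))"

definition mprod :: "('b::ring_1 list \<Rightarrow> 'b) \<Rightarrow> ('b list \<Rightarrow> 'b) \<Rightarrow> 'b list \<Rightarrow> 'b" where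
  "mprod f g xs = (\<Sum>k = 0..length xs. f (take k xs) * g (drop k xs))"

definition mone :: "'b::ring_1 list \<Rightarrow> 'b" where
  "mone xs = (if xs = [] then 1 else 0)"

definition mI :: "'b::ring_1 list \<Rightarrow> 'b" where
  "mI xs = (case xs of [x] \<Rightarrow> x | _ \<Rightarrow> 0)"

definition mcomp :: "('b::ring_1 list \<Rightarrow> 'b) \<Rightarrow> ('b list \<Rightarrow> 'b) \<Rightarrow> 'b list \<Rightarrow> 'b" where
  "mcomp f g xs = (\<Sum>bs \<in> {bs. concat bs = xs \<and> [] \<notin> set bs}. f (map g bs))"

definition minv :: "('k::field \<Rightarrow> 'b::ring_1 \<Rightarrow> 'b) \<Rightarrow> ('b list \<Rightarrow> 'b) \<Rightarrow> 'b list \<Rightarrow> 'b" where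
  "minv sB h = (THE g. mlin sB g \<and> mprod h g = mone \<and> mprod g h = mone)"

definition mcinv :: "('k::field \<Rightarrow> 'b::ring_1 \<Rightarrow> 'b) \<Rightarrow> ('b list \<Rightarrow> 'b) \<Rightarrow> 'b list \<Rightarrow> 'b" where
  "mcinv sB f = (THE g. mlin sB g \<and> g [] = 0 \<and> mcomp f g = mI \<and> mcomp g f = mI)"

definition Strans :: "('k::field \<Rightarrow> 'b::ring_1 \<Rightarrow> 'b) \<Rightarrow> ('b list \<Rightarrow> 'b) \<Rightarrow> 'b list \<Rightarrow> 'b" where
  "Strans sB f = (THE S. mcinv sB f = mprod mI S)"

datatype ptree = Lf | Nd ptree ptree

fun tsize :: "ptree \<Rightarrow> nat" where
  "tsize Lf = 0"
| "tsize (Nd l r) = tsize l + tsize r + 1"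

text \<open>ktree kap la tau as = kappa_tau(a_1..a_n); kblocks lists the arguments
 kappa_{tau_i}(segment) a_{j_i} along the right spine.\<close>
fun ktree :: "('a list \<Rightarrow> 'b::ring_1) \<Rightarrow> ('b \<Rightarrow> 'a \<Rightarrow> 'a) \<Rightarrow> ptree \<Rightarrow> 'a list \<Rightarrow> 'b"
and kblocks :: "('a list \<Rightarrow> 'b::ring_1) \<Rightarrow> ('b \<Rightarrow> 'a \<Rightarrow> 'a) \<Rightarrow> ptree \<Rightarrow> 'a list \<Rightarrow> 'a list" where
  "ktree kap la Lf as = 1"
| "ktree kap la (Nd l r) as =
     kap (la (ktree kap la l (take (tsize l) as)) (as ! tsize l) # kblocks kap la r (drop (tsize l + 1) as))"
| "kblocks kap la Lf as = []"
| "kblocks kap la (Nd l r) as =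
     la (ktree kap la l (take (tsize l) as)) (as ! tsize l) # kblocks kap la r (drop (tsize l + 1) as)"

definition cumulants :: "('b::ring_1 \<Rightarrow> 'a::ring_1 \<Rightarrow> 'a) \<Rightarrow> ('a \<Rightarrow> 'b) \<Rightarrow> 'a list \<Rightarrow> 'b" where
  "cumulants la E = (THE kap. kap [] = 0 \<and>
      (\<forall>as. E (prod_list as) = (\<Sum>\<tau> \<in> {\<tau>. tsize \<tau> = length as}. ktree kap la \<tau> as)))"

text \<open>Moment series M^a(x1..xn) = E(a x1 a x2 a ... xn a).\<close>
definition mword :: "('a::ring_1 \<Rightarrow> 'b \<Rightarrow> 'a) \<Rightarrow> 'a \<Rightarrow> 'b list \<Rightarrow> 'a" where
  "mword ra a xs = foldl (\<lambda>w x. ra w x * a) a xs"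

definition Mser :: "('a::ring_1 \<Rightarrow> 'b \<Rightarrow> 'a) \<Rightarrow> ('a \<Rightarrow> 'b) \<Rightarrow> 'a \<Rightarrow> 'b list \<Rightarrow> 'b" where
  "Mser ra E a xs = E (mword ra a xs)"

definition Kser :: "('b::ring_1 \<Rightarrow> 'a::ring_1 \<Rightarrow> 'a) \<Rightarrow> ('a \<Rightarrow> 'b) \<Rightarrow> 'a \<Rightarrow> 'b list \<Rightarrow> 'b" where
  "Kser la E a xs = cumulants la E (a # map (\<lambda>x. la x a) xs)"

definition kser :: "('b::ring_1 \<Rightarrow> 'a::ring_1 \<Rightarrow> 'a) \<Rightarrow> ('a \<Rightarrow> 'b) \<Rightarrow> 'a \<Rightarrow> 'b list \<Rightarrow> 'b" where
  "kser la E a = mprod mI (Kser la E a)"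

definition Sa :: "('k::field \<Rightarrow> 'b::ring_1 \<Rightarrow> 'b) \<Rightarrow> ('b \<Rightarrow> 'a::ring_1 \<Rightarrow> 'a) \<Rightarrow> ('a \<Rightarrow> 'b) \<Rightarrow> 'a \<Rightarrow> 'b list \<Rightarrow> 'b" where
  "Sa sB la E a = Strans sB (kser la E a)"

end

theory Submission
  imports Defs
begin


lemma fix_exists:
  fixes \<Phi> :: "('x list \<Rightarrow> 'a) \<Rightarrow> 'x list \<Rightarrow> 'a"
  assumes loc: "\<And>f g xs. (\<And>ys. length ys < length xs \<Longrightarrow> f ys = g ys) \<Longrightarrow> \<Phi> f xs = \<Phi> g xs"
  shows "\<exists>f. \<forall>xs. f xs = \<Phi> f xs"
proof -
  define it where "it n = (\<Phi> ^^ n) (\<lambda>_. undefined)" for n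
  have itS: "it (Suc n) = \<Phi> (it n)" for n by (simp add: it_def)
  have claim: "\<forall>m\<ge>n. \<forall>xs::'x list. length xs < n \<longrightarrow> it m xs = it n xs" for n
  proof (induction n)
    case 0 then show ?case by simp
  next
    case (Suc n)
    show ?case
    proof (intro allI impI)
      fix m and xs :: "'x list" assume m: "Suc n \<le> m" and l: "length xs < Suc n"
      then obtain m' where m': "m = Suc m'" "n \<le> m'" by (cases m) auto
      have "it m xs = \<Phi> (it m') xs" by (simp only: m' itS)
      also have "\<dots> = \<Phi> (it n) xs"
      proof (rule loc)
        fix ys :: "'x list" assume "length ys < length xs"
        then have "length ys < n" using l by simp
        then show "it m' ys = it n ys" using Suc.IH m'(2) by blast
      qed
      also have "\<dots> = it (Suc n) xs" by (simp only: itS)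
      finally show "it m xs = it (Suc n) xs" .
    qed
  qed
  define f where "f xs = it (Suc (length xs)) xs" for xs
  have "f xs = \<Phi> f xs" for xs :: "'x list"
  proof -
    have "f xs = \<Phi> (it (length xs)) xs" by (simp only: f_def itS)
    also have "\<dots> = \<Phi> f xs"
    proof (rule loc)
      fix ys :: "'x list" assume a: "length ys < length xs"
      have "it (length xs) ys = it (Suc (length ys)) ys"
        using claim[rule_format, of "Suc (length ys)" "length xs" ys] a by linarith
      then show "it (length xs) ys = f ys" by (simp only: f_def)
    qed
    finally show ?thesis .
  qed
  then show ?thesis by blast
qed
section \<open>Products of series\<close>

lemma mprod_Nil[simp]: "mprod f g [] = f [] * g []"
  by (simp add: mprod_def)

lemma mprod_Cons: "mprod f g (x#xs) = f [] * g (x#xs) + mprod (\<lambda>ys. f (x#ys)) g xs"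
  unfolding mprod_def
  by (simp add: atLeast0AtMost sum.atMost_Suc_shift del: sum.atMost_Suc)

lemma mprod_lin_left:
  "mprod (\<lambda>ys. c * f ys + g ys) h xs = c * mprod f h xs + mprod g h xs"
  unfolding mprod_def by (simp add: algebra_simps sum.distrib sum_distrib_left)

lemma mprod_add_left: "mprod (\<lambda>ys. f ys + g ys) h xs = mprod f h xs + mprod g h xs"
  unfolding mprod_def by (simp add: algebra_simps sum.distrib)

lemma mprod_add_right: "mprod h (\<lambda>ys. f ys + g ys) xs = mprod h f xs + mprod h g xs"
  unfolding mprod_def by (simp add: algebra_simps sum.distrib)

lemma mprod_diff_left: "mprod (\<lambda>ys. f ys - g ys) h xs = mprod f h xs - mprod g h xs"
  unfolding mprod_def by (simp add: algebra_simps sum_subtractf)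

lemma mprod_diff_right: "mprod h (\<lambda>ys. f ys - g ys) xs = mprod h f xs - mprod h g xs"
  unfolding mprod_def by (simp add: algebra_simps sum_subtractf)

lemma mprod_zero_left[simp]: "mprod (\<lambda>_. 0) h = (\<lambda>_. 0)"
  unfolding mprod_def by (simp add: fun_eq_iff)

lemma mprod_zero_right[simp]: "mprod h (\<lambda>_. 0) = (\<lambda>_. 0)"
  unfolding mprod_def by (simp add: fun_eq_iff)

lemma mprod_assoc: "mprod (mprod f g) h = mprod f (mprod g h)"
proof
  fix xs show "mprod (mprod f g) h xs = mprod f (mprod g h) xs"
  proof (induction xs arbitrary: f g h)
    case Nil then show ?case by (simp add: mult.assoc)
  next
    case (Cons x xs)
    have sh: "(\<lambda>ys. mprod f g (x#ys)) = (\<lambda>ys. f [] * g (x#ys) + mprod (\<lambda>ys. f (x#ys)) g ys)"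
      by (simp add: mprod_Cons)
    have "mprod (mprod f g) h (x#xs) = f [] * g [] * h (x#xs) + mprod (\<lambda>ys. f [] * g (x#ys) + mprod (\<lambda>ys. f (x#ys)) g ys) h xs"
      by (simp only: mprod_Cons sh mprod_Nil)
    also have "\<dots> = f [] * g [] * h (x#xs) + (f [] * mprod (\<lambda>ys. g (x#ys)) h xs + mprod (mprod (\<lambda>ys. f (x#ys)) g) h xs)"
      by (simp only: mprod_lin_left)
    also have "\<dots> = f [] * (g [] * h (x#xs) + mprod (\<lambda>ys. g (x#ys)) h xs) + mprod (\<lambda>ys. f (x#ys)) (mprod g h) xs"
      by (simp add: Cons.IH algebra_simps)
    also have "\<dots> = mprod f (mprod g h) (x#xs)"
      by (simp only: mprod_Cons)
    finally show ?case .
  qed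
qed

lemma mone_Nil[simp]: "mone [] = 1" and mone_Cons[simp]: "mone (x#xs) = 0"
  by (simp_all add: mone_def)

lemma mI_simps[simp]: "mI [] = 0" "mI [x] = x" "mI (x#y#ys) = 0"
  by (simp_all add: mI_def)

lemma mprod_mone_left[simp]: "mprod mone f = f"
proof
  fix xs show "mprod mone f xs = f xs"
    by (cases xs) (simp_all add: mprod_Cons)
qed

lemma mprod_mone_right[simp]: "mprod f mone = f"
proof
  fix xs show "mprod f mone xs = f xs"
    by (induction xs arbitrary: f) (simp_all add: mprod_Cons)
qed

lemma mprod_mI_left_Nil[simp]: "mprod mI f [] = 0"
  by simp

lemma mprod_mI_left_Cons[simp]: "mprod mI f (x#xs) = x * f xs"
proof -
  have "(\<lambda>ys. mI (x#ys)) = (\<lambda>ys. x * mone ys)"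
    by (auto simp: fun_eq_iff mI_def split: list.split)
  then show ?thesis
    by (simp add: mprod_Cons mprod_lin_left[where g="\<lambda>_. 0", simplified])
qed

lemma mprod_mI_right: "mprod f mI xs = (if xs = [] then 0 else f (butlast xs) * last xs)"
proof (induction xs arbitrary: f)
  case Nil then show ?case by simp
next
  case (Cons x xs)
  show ?case
  proof (cases xs)
    case Nil
    then show ?thesis by (simp add: mprod_Cons)
  next
    case (Cons y ys)
    then show ?thesis using Cons.IH[of "\<lambda>ys. f (x#ys)"] by (simp add: mprod_Cons)
  qed
qed

lemma mprod_mI_cancel:
  assumes "mprod mI f = mprod mI g" shows "f = g"
proof
  fix xs
  have "mprod mI f (1#xs) = mprod mI g (1#xs)" using assms by simp
  then show "f xs = g xs" by simp
qed



definition binv :: "'b::ring_1 \<Rightarrow> 'b" where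
  "binv x = (THE y. x * y = 1 \<and> y * x = 1)"

lemma binv: assumes "bunit x" shows "x * binv x = 1" "binv x * x = 1"
proof -
  obtain y where y: "x * y = 1" "y * x = 1" using assms by (auto simp: bunit_def)
  have "binv x = y" unfolding binv_def
  proof (rule the_equality)
    show "x * y = 1 \<and> y * x = 1" using y by simp
    fix z assume z: "x * z = 1 \<and> z * x = 1"
    have "z = z * (x * y)" using y by simp
    also have "\<dots> = y" using z by (simp flip: mult.assoc)
    finally show "z = y" .
  qed
  then show "x * binv x = 1" "binv x * x = 1" using y by auto
qed

lemma bunit_binv: "bunit x \<Longrightarrow> bunit (binv x)"
  using binv unfolding bunit_def by blast

lemma bunit_one[simp]: "bunit 1" by (auto simp: bunit_def)

lemma bunit_mult: "bunit x \<Longrightarrow> bunit y \<Longrightarrow> bunit (x * y)"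
  unfolding bunit_def
proof (elim exE conjE)
  fix x' y' assume a: "x * x' = 1" "x' * x = 1" "y * y' = 1" "y' * y = 1"
  have "x * y * (y' * x') = x * (y * y') * x'" by (simp only: mult.assoc)
  moreover have "y' * x' * (x * y) = y' * (x' * x) * y" by (simp only: mult.assoc)
  ultimately show "\<exists>z. x * y * z = 1 \<and> z * (x * y) = 1" using a by auto
qed

locale kal =
  fixes sB :: "'k::field_char_0 \<Rightarrow> 'b::ring_1 \<Rightarrow> 'b"
  assumes kalg: "kalg sB"
begin

lemma sB_add: "sB c (x + y) = sB c x + sB c y" using kalg by (simp add: kalg_def)
lemma sB_one: "sB 1 x = x" using kalg by (simp add: kalg_def)
lemma sB_ml: "sB c (x * y) = sB c x * y" using kalg unfolding kalg_def by blast
lemma sB_mr: "sB c (x * y) = x * sB c y" using kalg unfolding kalg_def by blast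
lemma sB_zero[simp]: "sB c 0 = 0"
  using sB_add[of c 0 0] by simp
lemma sB_minus: "sB c (- x) = - sB c x"
  using sB_add[of c x "-x"] by (simp add: add_eq_0_iff2)
lemma sB_diff: "sB c (x - y) = sB c x - sB c y"
  using sB_add[of c x "-y"] sB_minus by simp
lemma sB_sum: "sB c (sum f A) = sum (\<lambda>i. sB c (f i)) A"
  by (induction A rule: infinite_finite_induct) (simp_all add: sB_add)

definition lf :: "('b \<Rightarrow> 'b) \<Rightarrow> bool" where
  "lf T \<longleftrightarrow> (\<forall>c x y. T (sB c x + y) = sB c (T x) + T y)"

lemma lfD: "lf T \<Longrightarrow> T (sB c x + y) = sB c (T x) + T y" by (simp add: lf_def)

lemma lf_zero: "lf T \<Longrightarrow> T 0 = 0"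
  using lfD[of T 1 0 0] by (simp add: sB_one)

lemma lf_add_arg: "lf T \<Longrightarrow> T (x + y) = T x + T y"
  using lfD[of T 1 x y] by (simp add: sB_one)

lemma lf_id: "lf (\<lambda>w. w)" by (simp add: lf_def)
lemma lf_const0: "lf (\<lambda>w. 0)" by (simp add: lf_def)
lemma lf_add: "lf T \<Longrightarrow> lf U \<Longrightarrow> lf (\<lambda>w. T w + U w)"
  by (simp add: lf_def sB_add algebra_simps)
lemma lf_uminus: "lf T \<Longrightarrow> lf (\<lambda>w. - T w)"
  by (simp add: lf_def sB_minus algebra_simps)
lemma lf_diff: "lf T \<Longrightarrow> lf U \<Longrightarrow> lf (\<lambda>w. T w - U w)"
  by (simp add: lf_def sB_diff algebra_simps)
lemma lf_multl: "lf T \<Longrightarrow> lf (\<lambda>w. d * T w)"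
  by (simp add: lf_def sB_mr algebra_simps)
lemma lf_multr: "lf T \<Longrightarrow> lf (\<lambda>w. T w * d)"
  by (simp add: lf_def sB_ml algebra_simps)
lemma lf_sum: "(\<And>i. i \<in> A \<Longrightarrow> lf (T i)) \<Longrightarrow> lf (\<lambda>w. \<Sum>i\<in>A. T i w)"
proof (induction A rule: infinite_finite_induct)
  case (infinite A) then show ?case by (simp add: lf_const0)
next
  case empty then show ?case by (simp add: lf_const0)
next
  case (insert x F) then show ?case by (simp add: lf_add)
qed
lemma lf_comp: "lf T \<Longrightarrow> lf U \<Longrightarrow> lf (\<lambda>w. T (U w))"
  by (simp add: lf_def)

definition lin :: "('b list \<Rightarrow> 'b) \<Rightarrow> bool" where
  "lin f \<longleftrightarrow> (\<forall>xs ys. lf (\<lambda>w. f (xs @ w # ys)))"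

lemma linD: "lin f \<Longrightarrow> lf (\<lambda>w. f (xs @ w # ys))" by (simp add: lin_def)

lemma mlin_lin: "mlin sB f \<longleftrightarrow> lin f"
proof
  assume m: "mlin sB f"
  show "lin f" unfolding lin_def lf_def
    using m by (simp add: mlin_def)
next
  assume l: "lin f"
  show "mlin sB f" unfolding mlin_def
  proof (intro conjI allI)
    fix xs ys x y
    show "f (xs @ (x + y) # ys) = f (xs @ x # ys) + f (xs @ y # ys)"
      using lf_add_arg[OF linD[OF l]] by simp
    fix c
    show "f (xs @ sB c x # ys) = sB c (f (xs @ x # ys))"
      using lfD[OF linD[OF l, of xs ys], of c x 0] lf_zero[OF linD[OF l, of xs ys]] by simp
  qed
qed

lemma lin_zero: "lin (\<lambda>_. 0)" by (simp add: lin_def lf_const0)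

lemma lin_mone: "lin mone"
  by (simp add: lin_def mone_def lf_const0)

lemma lin_mI: "lin mI"
  unfolding lin_def
proof (intro allI)
  fix xs ys :: "'b list"
  show "lf (\<lambda>w. mI (xs @ w # ys))"
  proof (cases xs)
    case Nil
    then show ?thesis by (cases ys) (simp_all add: lf_id lf_const0)
  next
    case (Cons z zs)
    have "mI (xs @ w # ys) = 0" for w using Cons by (cases zs) simp_all
    then show ?thesis by (simp add: lf_const0)
  qed
qed

lemma lin_add: "lin f \<Longrightarrow> lin g \<Longrightarrow> lin (\<lambda>xs. f xs + g xs)"
  by (simp add: lin_def lf_add)
lemma lin_diff: "lin f \<Longrightarrow> lin g \<Longrightarrow> lin (\<lambda>xs. f xs - g xs)"
  by (simp add: lin_def lf_diff)
lemma lin_uminus: "lin f \<Longrightarrow> lin (\<lambda>xs. - f xs)"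
  by (simp add: lin_def lf_uminus)
lemma lin_shift: assumes "lin f" shows "lin (\<lambda>ys. f (x # ys))"
  unfolding lin_def
proof (intro allI)
  fix xs ys show "lf (\<lambda>w. f (x # xs @ w # ys))" using linD[OF assms, of "x#xs" ys] by simp
qed

lemma take_app_Cons: "take k (xs @ w # ys) = (if k \<le> length xs then take k xs else xs @ w # take (k - length xs - 1) ys)"
  by (induction xs arbitrary: k) (auto simp: take_Cons' split: nat.split)
lemma drop_app_Cons: "drop k (xs @ w # ys) = (if k \<le> length xs then drop k xs @ w # ys else drop (k - length xs - 1) ys)"
  by (induction xs arbitrary: k) (auto simp: drop_Cons' split: nat.split)

lemma lin_mprod: assumes f: "lin f" and g: "lin g" shows "lin (mprod f g)"
  unfolding lin_def mprod_def length_append length_Cons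
proof (intro allI lf_sum)
  fix xs ys :: "'b list" and k assume "k \<in> {0..length xs + Suc (length ys)}"
  show "lf (\<lambda>w. f (take k (xs @ w # ys)) * g (drop k (xs @ w # ys)))"
  proof (cases "k \<le> length xs")
    case True
    then show ?thesis by (simp add: take_app_Cons drop_app_Cons lf_multl linD[OF g])
  next
    case False
    then have "take k (xs @ w # ys) = xs @ w # take (k - length xs - 1) ys"
      "drop k (xs @ w # ys) = drop (k - length xs - 1) ys" for w
      by (simp_all only: take_app_Cons drop_app_Cons if_False)
    then show ?thesis by (simp add: lf_multr linD[OF f])
  qed
qed

definition trunc :: "nat \<Rightarrow> ('b list \<Rightarrow> 'b) \<Rightarrow> 'b list \<Rightarrow> 'b" where
  "trunc n f xs = (if length xs \<le> n then f xs else 0)"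

lemma lin_trunc_iff: "lin (trunc n f) \<longleftrightarrow> (\<forall>xs ys. length xs + length ys < n \<longrightarrow> lf (\<lambda>w. f (xs @ w # ys)))"
proof
  assume a: "lin (trunc n f)"
  show "\<forall>xs ys. length xs + length ys < n \<longrightarrow> lf (\<lambda>w. f (xs @ w # ys))"
  proof (intro allI impI)
    fix xs ys :: "'b list" assume "length xs + length ys < n"
    then have "trunc n f (xs @ w # ys) = f (xs @ w # ys)" for w by (simp add: trunc_def)
    then show "lf (\<lambda>w. f (xs @ w # ys))" using linD[OF a, of xs ys] by simp
  qed
next
  assume a: "\<forall>xs ys. length xs + length ys < n \<longrightarrow> lf (\<lambda>w. f (xs @ w # ys))"
  show "lin (trunc n f)" unfolding lin_def
  proof (intro allI)
    fix xs ys :: "'b list"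
    show "lf (\<lambda>w. trunc n f (xs @ w # ys))"
    proof (cases "length xs + length ys < n")
      case True
      then show ?thesis using a by (simp add: trunc_def)
    next
      case False
      then show ?thesis by (simp add: trunc_def lf_const0)
    qed
  qed
qed

lemma lin_trunc: "lin f \<Longrightarrow> lin (trunc n f)"
  by (simp add: lin_trunc_iff linD)

lemma trunc_eq: "length xs \<le> n \<Longrightarrow> trunc n f xs = f xs" by (simp add: trunc_def)

end

section \<open>Multiplicative inverse\<close>

definition rinvF :: "('b::ring_1 list \<Rightarrow> 'b) \<Rightarrow> ('b list \<Rightarrow> 'b) \<Rightarrow> 'b list \<Rightarrow> 'b" where
  "rinvF h r xs = (if xs = [] then binv (h []) else - binv (h []) * (\<Sum>k = 1..length xs. h (take k xs) * r (drop k xs)))"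

definition rinv :: "('b::ring_1 list \<Rightarrow> 'b) \<Rightarrow> 'b list \<Rightarrow> 'b" where
  "rinv h = (SOME r. \<forall>xs. r xs = rinvF h r xs)"

lemma rinv_eq: "rinv h xs = rinvF h (rinv h) xs"
proof -
  have "\<exists>r. \<forall>xs. r xs = rinvF h r xs"
  proof (rule fix_exists)
    fix f g :: "'a list \<Rightarrow> 'a" and xs :: "'a list"
    assume a: "\<And>ys. length ys < length xs \<Longrightarrow> f ys = g ys"
    have "(\<Sum>k = 1..length xs. h (take k xs) * f (drop k xs)) = (\<Sum>k = 1..length xs. h (take k xs) * g (drop k xs))"
      by (rule sum.cong) (auto simp: a)
    then show "rinvF h f xs = rinvF h g xs"
      unfolding rinvF_def by simp
  qed
  then have "\<forall>xs. rinv h xs = rinvF h (rinv h) xs" unfolding rinv_def by (rule someI_ex)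
  then show ?thesis by blast
qed

lemma rinv_Nil: "rinv h [] = binv (h [])"
  by (subst rinv_eq) (simp add: rinvF_def)

lemma rinv_right: assumes "bunit (h [])" shows "mprod h (rinv h) = mone"
proof
  fix xs show "mprod h (rinv h) xs = mone xs"
  proof (cases "xs = []")
    case True then show ?thesis using binv[OF assms] by (simp add: rinv_Nil)
  next
    case False
    have "mprod h (rinv h) xs = h [] * rinv h xs + (\<Sum>k = 1..length xs. h (take k xs) * rinv h (drop k xs))"
      unfolding mprod_def by (simp add: sum.atLeast_Suc_atMost)
    also have "\<dots> = 0"
      apply (subst rinv_eq) using False binv[OF assms] by (simp add: rinvF_def flip: mult.assoc)
    finally show ?thesis using False by (cases xs) auto
  qed
qed

lemma rinv_left: assumes "bunit (h [])" shows "mprod (rinv h) h = mone"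
proof -
  have u: "bunit (rinv h [])" using assms by (simp add: rinv_Nil bunit_binv)
  have "h = mprod h (mprod (rinv h) (rinv (rinv h)))" using rinv_right[of "rinv h", OF u] by simp
  also have "\<dots> = rinv (rinv h)" by (simp add: rinv_right[of h, OF assms] flip: mprod_assoc)
  finally have "h = rinv (rinv h)" .
  then show ?thesis using rinv_right[of "rinv h", OF u] by simp
qed

lemma inv_unique:
  assumes "mprod h g = mone" "mprod g h = mone" "mprod h g' = mone"
  shows "g' = g"
proof -
  have "g' = mprod mone g'" by simp
  also have "\<dots> = mprod (mprod g h) g'" using assms(2) by simp
  also have "\<dots> = mprod g (mprod h g')" by (rule mprod_assoc)
  also have "\<dots> = g" using assms(3) by simp
  finally show ?thesis .
qed

context kal begin

lemma lin_rinv: assumes h: "lin h" shows "lin (rinv h)"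
proof -
  have "\<forall>xs ys. length xs + length ys = n \<longrightarrow> lf (\<lambda>w. rinv h (xs @ w # ys))" for n
  proof (induction n rule: less_induct)
    case (less n)
    show ?case
    proof (intro allI impI)
      fix xs ys :: "'b list" assume len: "length xs + length ys = n"
      have "lf (\<lambda>w. - binv (h []) * (\<Sum>k = 1..length xs + Suc (length ys). h (take k (xs @ w # ys)) * rinv h (drop k (xs @ w # ys))))"
      proof (intro lf_multl lf_sum)
        fix k assume k: "k \<in> {1..length xs + Suc (length ys)}"
        show "lf (\<lambda>w. h (take k (xs @ w # ys)) * rinv h (drop k (xs @ w # ys)))"
        proof (cases "k \<le> length xs")
          case True
          have "lf (\<lambda>w. rinv h (drop k xs @ w # ys))"
            using less.IH[of "length (drop k xs) + length ys"] k True len by auto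
          then show ?thesis using True by (simp add: take_app_Cons drop_app_Cons lf_multl)
        next
          case False
          then have "take k (xs @ w # ys) = xs @ w # take (k - length xs - 1) ys"
            "drop k (xs @ w # ys) = drop (k - length xs - 1) ys" for w
            by (simp_all only: take_app_Cons drop_app_Cons if_False)
          then show ?thesis by (simp add: lf_multr linD[OF h])
        qed
      qed
      then show "lf (\<lambda>w. rinv h (xs @ w # ys))"
        by (subst rinv_eq) (simp add: rinvF_def)
    qed
  qed
  then show ?thesis by (auto simp: lin_def)
qed

lemma minv_eq: assumes "lin h" "bunit (h [])" shows "minv sB h = rinv h"
  unfolding minv_def
proof (rule the_equality)
  show "mlin sB (rinv h) \<and> mprod h (rinv h) = mone \<and> mprod (rinv h) h = mone"
    using assms by (simp add: mlin_lin lin_rinv rinv_right rinv_left)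
  fix g assume "mlin sB g \<and> mprod h g = mone \<and> mprod g h = mone"
  then show "g = rinv h" using inv_unique[of h "rinv h" g] rinv_right[of h, OF assms(2)] rinv_left[of h, OF assms(2)]
    by auto
qed

end



section \<open>Block decompositions\<close>

definition blocks :: "'x list \<Rightarrow> 'x list list set" where
  "blocks xs = {bs. concat bs = xs \<and> [] \<notin> set bs}"

lemma blocks_Nil[simp]: "blocks [] = {[]}"
proof -
  have "x = []" if "concat x = []" "[] \<notin> set x" for x :: "'a list list"
    using that by (cases x) auto
  then show ?thesis by (auto simp: blocks_def)
qed

lemma sum_single: "finite A \<Longrightarrow> a \<in> A \<Longrightarrow> (\<And>k. k \<in> A \<Longrightarrow> k \<noteq> a \<Longrightarrow> F k = 0) \<Longrightarrow> sum F A = F a"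
  by (simp add: sum.remove sum.neutral)

lemma blocks_Cons: "blocks (x#xs) = (\<Union>k\<in>{0..length xs}. (\<lambda>bs. (x # take k xs) # bs) ` blocks (drop k xs))"
proof (intro equalityI subsetI)
  fix bs assume "bs \<in> blocks (x#xs)"
  then have c: "concat bs = x#xs" and ne: "[] \<notin> set bs" by (auto simp: blocks_def)
  then obtain b bs' where bs: "bs = b # bs'" by (cases bs) auto
  with ne obtain y p where b: "b = y # p" by (cases b) auto
  from c bs b have y: "y = x" and pc: "p @ concat bs' = xs" by auto
  then have "p = take (length p) xs" "concat bs' = drop (length p) xs" by auto
  moreover have "length p \<le> length xs" using pc by auto
  ultimately show "bs \<in> (\<Union>k\<in>{0..length xs}. (\<lambda>bs. (x # take k xs) # bs) ` blocks (drop k xs))"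
    using bs b y ne by (auto simp: blocks_def intro!: bexI[of _ "length p"])
next
  fix bs assume "bs \<in> (\<Union>k\<in>{0..length xs}. (\<lambda>bs. (x # take k xs) # bs) ` blocks (drop k xs))"
  then show "bs \<in> blocks (x#xs)" by (auto simp: blocks_def)
qed

lemma finite_blocks: "finite (blocks xs)"
proof (induction "length xs" arbitrary: xs rule: less_induct)
  case less
  show ?case
  proof (cases xs)
    case Nil then show ?thesis by simp
  next
    case (Cons y ys)
    have "finite (blocks (drop k ys))" for k using less Cons by auto
    then show ?thesis using Cons by (simp add: blocks_Cons)
  qed
qed

lemma sum_blocks_Cons:
  "sum F (blocks (x#xs)) = (\<Sum>k=0..length xs. \<Sum>bs\<in>blocks (drop k xs). F ((x # take k xs) # bs))"
proof -
  have "sum F (blocks (x#xs)) = (\<Sum>k=0..length xs. sum F ((\<lambda>bs. (x # take k xs) # bs) ` blocks (drop k xs)))"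
    unfolding blocks_Cons
  proof (rule sum.UNION_disjoint)
    show "finite {0..length xs}" by simp
    show "\<forall>i\<in>{0..length xs}. finite ((\<lambda>bs. (x # take i xs) # bs) ` blocks (drop i xs))"
      by (simp add: finite_blocks)
    show "\<forall>i\<in>{0..length xs}. \<forall>j\<in>{0..length xs}. i \<noteq> j \<longrightarrow>
      (\<lambda>bs. (x # take i xs) # bs) ` blocks (drop i xs) \<inter> (\<lambda>bs. (x # take j xs) # bs) ` blocks (drop j xs) = {}"
    proof (intro ballI impI)
      fix i j assume "i \<in> {0..length xs}" "j \<in> {0..length xs}" "i \<noteq> j"
      then have "take i xs \<noteq> take j xs" by (metis atLeastAtMost_iff length_take min.absorb2)
      then show "(\<lambda>bs. (x # take i xs) # bs) ` blocks (drop i xs) \<inter> (\<lambda>bs. (x # take j xs) # bs) ` blocks (drop j xs) = {}"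
        by auto
    qed
  qed
  also have "\<dots> = (\<Sum>k=0..length xs. \<Sum>bs\<in>blocks (drop k xs). F ((x # take k xs) # bs))"
    by (rule sum.cong) (simp_all add: sum.reindex)
  finally show ?thesis .
qed

lemma sum_blocks_map:
  "sum F (blocks (map h xs)) = sum (\<lambda>bss. F (map (map h) bss)) (blocks xs)"
proof (induction "length xs" arbitrary: xs F rule: less_induct)
  case less
  show ?case
  proof (cases xs)
    case Nil then show ?thesis by simp
  next
    case (Cons y ys)
    have "sum F (blocks (map h xs)) = (\<Sum>k=0..length ys. \<Sum>bs\<in>blocks (map h (drop k ys)). F ((h y # map h (take k ys)) # bs))"
      using Cons by (simp add: sum_blocks_Cons take_map drop_map)
    also have "\<dots> = (\<Sum>k=0..length ys. \<Sum>bs\<in>blocks (drop k ys). F ((h y # map h (take k ys)) # map (map h) bs))"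
      by (rule sum.cong) (use less Cons in auto)
    also have "\<dots> = sum (\<lambda>bss. F (map (map h) bss)) (blocks xs)"
      using Cons by (simp add: sum_blocks_Cons)
    finally show ?thesis .
  qed
qed

lemma blocks_len: "bs \<in> blocks xs \<Longrightarrow> b \<in> set bs \<Longrightarrow> length b \<le> length xs"
proof -
  have "length b \<le> length (concat bs)" if "b \<in> set bs" for bs :: "'a list list"
    using that by (induction bs) auto
  then show "bs \<in> blocks xs \<Longrightarrow> b \<in> set bs \<Longrightarrow> length b \<le> length xs" by (auto simp: blocks_def)
qed

lemma blocks_len2: "bs \<in> blocks xs \<Longrightarrow> length bs \<le> length xs"
proof -
  assume a: "bs \<in> blocks xs"
  have "length bs \<le> length (concat bs)" if "[] \<notin> set bs" for bs :: "'a list list"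
    using that
  proof (induction bs)
    case (Cons a bs)
    then have "1 \<le> length a" by (cases a) auto
    then show ?case using Cons by simp
  qed simp
  then show ?thesis using a by (auto simp: blocks_def)
qed

section \<open>Composition\<close>

lemma mcomp_blocks: "mcomp f g xs = sum (\<lambda>bs. f (map g bs)) (blocks xs)"
  by (simp add: mcomp_def blocks_def)

lemma mcomp_Nil[simp]: "mcomp f g [] = f []"
  by (simp add: mcomp_blocks)

lemma mcomp_Cons: "mcomp f g (x#xs) = (\<Sum>k=0..length xs. mcomp (\<lambda>ys. f (g (x # take k xs) # ys)) g (drop k xs))"
  by (simp add: mcomp_blocks sum_blocks_Cons)

lemma mcomp_add_left: "mcomp (\<lambda>ys. f ys + h ys) g xs = mcomp f g xs + mcomp h g xs"
  by (simp add: mcomp_blocks sum.distrib)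

lemma mcomp_diff_left: "mcomp (\<lambda>ys. f ys - h ys) g xs = mcomp f g xs - mcomp h g xs"
  by (simp add: mcomp_blocks sum_subtractf)

lemma mcomp_cmult_left: "mcomp (\<lambda>ys. c * f ys) g xs = c * mcomp f g xs"
  by (simp add: mcomp_blocks sum_distrib_left)

lemma mcomp_zero_left[simp]: "mcomp (\<lambda>_. 0) g = (\<lambda>_. 0)"
  by (simp add: mcomp_blocks fun_eq_iff)

lemma mcomp_local:
  assumes "\<And>ys. length ys \<le> n \<Longrightarrow> f1 ys = f2 ys" "\<And>ys. length ys \<le> n \<Longrightarrow> g1 ys = g2 ys" "length xs \<le> n"
  shows "mcomp f1 g1 xs = mcomp f2 g2 xs"
  unfolding mcomp_blocks
proof (rule sum.cong)
  fix bs assume bs: "bs \<in> blocks xs"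
  have "\<And>b. b \<in> set bs \<Longrightarrow> g1 b = g2 b" using blocks_len[OF bs] assms(2,3) by (meson le_trans)
  then have "map g1 bs = map g2 bs" by (rule map_cong[OF refl])
  moreover have "length (map g2 bs) \<le> n" using blocks_len2[OF bs] assms(3) by simp
  ultimately show "f1 (map g1 bs) = f2 (map g2 bs)" using assms(1)[of "map g2 bs"] by (simp only:)
qed simp

lemma mcomp_mone_left: "mcomp mone g = mone"
proof
  fix xs show "mcomp mone g xs = mone xs"
    by (cases xs) (simp_all add: mcomp_Cons)
qed

lemma mcomp_mI_left: assumes "g [] = 0" shows "mcomp mI g = g"
proof
  fix xs show "mcomp mI g xs = g xs"
  proof (cases xs)
    case Nil then show ?thesis using assms by simp
  next
    case (Cons x xs')
    have e: "(\<lambda>ys. mI (v # ys)) = (\<lambda>ys. v * mone ys)" for v :: 'a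
      by (auto simp: fun_eq_iff mI_def split: list.split)
    have "mcomp mI g xs = (\<Sum>k=0..length xs'. g (x # take k xs') * mone (drop k xs'))"
      using Cons by (simp add: mcomp_Cons e mcomp_cmult_left mcomp_mone_left)
    also have "\<dots> = g (x # take (length xs') xs') * mone (drop (length xs') xs')"
      by (rule sum_single) (auto simp: mone_def)
    finally show ?thesis using Cons by simp
  qed
qed

context kal begin

lemma lin_zero_arg: "lin f \<Longrightarrow> f (xs @ 0 # ys) = 0"
  using lf_zero[OF linD] by blast

lemma mcomp_mI_right: assumes "lin f" shows "mcomp f mI = f"
proof
  fix xs show "mcomp f mI xs = f xs"
    using assms
  proof (induction xs arbitrary: f)
    case Nil then show ?case by simp
  next
    case (Cons x xs)
    have "mcomp f mI (x#xs) = (\<Sum>k=0..length xs. mcomp (\<lambda>ys. f (mI (x # take k xs) # ys)) mI (drop k xs))"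
      by (simp add: mcomp_Cons)
    also have "\<dots> = mcomp (\<lambda>ys. f (mI (x # take 0 xs) # ys)) mI (drop 0 xs)"
    proof (rule sum_single)
      fix i assume "i \<in> {0..length xs}" "i \<noteq> 0"
      show "mcomp (\<lambda>ys. f (mI (x # take i xs) # ys)) mI (drop i xs) = 0"
      proof -
        have "mI (x # take i xs) = 0" using \<open>i \<in> {0..length xs}\<close> \<open>i \<noteq> 0\<close> by (cases xs; cases i) auto
        moreover have "f (0 # ys) = 0" for ys using lin_zero_arg[OF Cons.prems, of "[]"] by simp
        ultimately show ?thesis by simp
      qed
    qed auto
    also have "\<dots> = f (x # xs)" using Cons.IH[OF lin_shift[OF Cons.prems]] by simp
    finally show ?case .
  qed
qed

lemma mcomp_lin_first: "mcomp (\<lambda>zs. sB c (A zs) + B zs) g xs = sB c (mcomp A g xs) + mcomp B g xs"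
  by (simp add: mcomp_blocks sum.distrib sB_sum)

lemma lin_mcomp: assumes f: "lin f" and g: "lin g" shows "lin (mcomp f g)"
proof -
  have "\<forall>f xs ys. lin f \<longrightarrow> length xs = n \<longrightarrow> lf (\<lambda>w. mcomp f g (xs @ w # ys))" for n
  proof (induction n rule: less_induct)
    case (less n)
    show ?case
    proof (intro allI impI)
      fix f and xs ys :: "'b list" assume f: "lin f" and n: "length xs = n"
      show "lf (\<lambda>w. mcomp f g (xs @ w # ys))"
      proof (cases xs)
        case Nil
        have "lf (\<lambda>w. \<Sum>k=0..length ys. mcomp (\<lambda>zs. f (g (w # take k ys) # zs)) g (drop k ys))"
        proof (intro lf_sum)
          fix k
          show "lf (\<lambda>w. mcomp (\<lambda>zs. f (g (w # take k ys) # zs)) g (drop k ys))"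
            unfolding lf_def
          proof (intro allI)
            fix c u v
            have "f (g ((sB c u + v) # take k ys) # zs) = sB c (f (g (u # take k ys) # zs)) + f (g (v # take k ys) # zs)" for zs
              using lfD[OF linD[OF g, of "[]" "take k ys"], of c u v] lfD[OF linD[OF f, of "[]" zs]] by simp
            then show "mcomp (\<lambda>zs. f (g ((sB c u + v) # take k ys) # zs)) g (drop k ys) =
              sB c (mcomp (\<lambda>zs. f (g (u # take k ys) # zs)) g (drop k ys)) + mcomp (\<lambda>zs. f (g (v # take k ys) # zs)) g (drop k ys)"
              by (simp add: mcomp_lin_first)
          qed
        qed
        then show ?thesis using Nil by (simp add: mcomp_Cons)
      next
        case (Cons x xs')
        have "lf (\<lambda>w. \<Sum>k=0..length xs' + Suc (length ys). mcomp (\<lambda>zs. f (g (x # take k (xs' @ w # ys)) # zs)) g (drop k (xs' @ w # ys)))"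
        proof (intro lf_sum)
          fix k
          show "lf (\<lambda>w. mcomp (\<lambda>zs. f (g (x # take k (xs' @ w # ys)) # zs)) g (drop k (xs' @ w # ys)))"
          proof (cases "k \<le> length xs'")
            case True
            then have e: "take k (xs' @ w # ys) = take k xs'" "drop k (xs' @ w # ys) = drop k xs' @ w # ys" for w
              by (simp_all only: take_app_Cons drop_app_Cons if_True)
            have "lf (\<lambda>w. mcomp (\<lambda>zs. f (g (x # take k xs') # zs)) g (drop k xs' @ w # ys))"
              using less.IH[of "length (drop k xs')"] Cons n lin_shift[OF f] by auto
            then show ?thesis by (simp only: e)
          next
            case False
            then have e: "take k (xs' @ w # ys) = xs' @ w # take (k - length xs' - 1) ys" "drop k (xs' @ w # ys) = drop (k - length xs' - 1) ys" for w
              by (simp_all only: take_app_Cons drop_app_Cons if_False)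
            show ?thesis unfolding e lf_def
            proof (intro allI)
              fix c u v
              let ?t = "take (k - length xs' - 1) ys"
              have "f (g (x # xs' @ (sB c u + v) # ?t) # zs) = sB c (f (g (x # xs' @ u # ?t) # zs)) + f (g (x # xs' @ v # ?t) # zs)" for zs
                using lfD[OF linD[OF g, of "x#xs'" ?t], of c u v] lfD[OF linD[OF f, of "[]" zs]] by simp
              then show "mcomp (\<lambda>zs. f (g (x # xs' @ (sB c u + v) # ?t) # zs)) g (drop (k - length xs' - 1) ys) =
                sB c (mcomp (\<lambda>zs. f (g (x # xs' @ u # ?t) # zs)) g (drop (k - length xs' - 1) ys)) +
                mcomp (\<lambda>zs. f (g (x # xs' @ v # ?t) # zs)) g (drop (k - length xs' - 1) ys)"
                by (simp add: mcomp_lin_first)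
            qed
          qed
        qed
        then show ?thesis using Cons by (simp add: mcomp_Cons)
      qed
    qed
  qed
  then show ?thesis using f by (auto simp: lin_def)
qed

end



lemma sum_triangle_swap:
  fixes n :: nat
  shows "(\<Sum>j=0..n. \<Sum>k=0..j. T k j) = (\<Sum>k=0..n. \<Sum>i=0..n-k. T k (k+i))"
proof -
  have "(\<Sum>j=0..n. \<Sum>k=0..j. T k j) = (\<Sum>k=0..n. \<Sum>j=k..n. T k j)"
  proof (induction n)
    case 0 then show ?case by simp
  next
    case (Suc n)
    have "(\<Sum>k=0..Suc n. \<Sum>j=k..Suc n. T k j) = (\<Sum>k=0..n. \<Sum>j=k..Suc n. T k j) + T (Suc n) (Suc n)"
      by simp
    also have "\<dots> = (\<Sum>k=0..n. (\<Sum>j=k..n. T k j) + T k (Suc n)) + T (Suc n) (Suc n)"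
      by (intro arg_cong2[where f="(+)"] sum.cong refl) simp
    also have "\<dots> = (\<Sum>j=0..Suc n. \<Sum>k=0..j. T k j)"
      using Suc by (simp add: sum.distrib add.assoc)
    finally show ?case by simp
  qed
  also have "\<dots> = (\<Sum>k=0..n. \<Sum>i=0..n-k. T k (k+i))"
  proof (rule sum.cong)
    fix k assume "k \<in> {0..n}"
    then have "(\<Sum>j=k..n. T k j) = (\<Sum>j=0+k..(n-k)+k. T k j)" by simp
    also have "\<dots> = (\<Sum>i=0..n-k. T k (i+k))" by (rule sum.shift_bounds_cl_nat_ivl)
    finally show "(\<Sum>j=k..n. T k j) = (\<Sum>i=0..n-k. T k (k+i))" by (simp add: add.commute)
  qed simp
  finally show ?thesis .
qed

lemma mcomp_mprod: "mcomp (mprod f h) g = mprod (mcomp f g) (mcomp h g)"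
proof
  fix xs show "mcomp (mprod f h) g xs = mprod (mcomp f g) (mcomp h g) xs"
  proof (induction "length xs" arbitrary: xs f rule: less_induct)
    case less
    show ?case
    proof (cases xs)
      case Nil then show ?thesis by simp
    next
      case (Cons x xs')
      define H where "H = mcomp h g"
      define F where "F k = (\<lambda>zs. f (g (x # take k xs') # zs))" for k
      have "mcomp (mprod f h) g xs = (\<Sum>k=0..length xs'. mcomp (\<lambda>ys. mprod f h (g (x # take k xs') # ys)) g (drop k xs'))"
        using Cons by (simp add: mcomp_Cons)
      also have "\<dots> = (\<Sum>k=0..length xs'. f [] * mcomp (\<lambda>ys. h (g (x # take k xs') # ys)) g (drop k xs') + mcomp (mprod (F k) h) g (drop k xs'))"
        by (simp add: mprod_Cons mcomp_add_left mcomp_cmult_left F_def)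
      also have "\<dots> = f [] * H xs + (\<Sum>k=0..length xs'. mprod (mcomp (F k) g) H (drop k xs'))"
        using less Cons by (simp add: sum.distrib sum_distrib_left mcomp_Cons H_def)
      also have "(\<Sum>k=0..length xs'. mprod (mcomp (F k) g) H (drop k xs')) = mprod (\<lambda>ys. mcomp f g (x#ys)) H xs'"
      proof -
        have "mprod (\<lambda>ys. mcomp f g (x#ys)) H xs' = (\<Sum>j=0..length xs'. mcomp f g (x # take j xs') * H (drop j xs'))"
          by (simp add: mprod_def)
        also have "\<dots> = (\<Sum>j=0..length xs'. \<Sum>k=0..j. mcomp (F k) g (drop k (take j xs')) * H (drop j xs'))"
        proof (rule sum.cong)
          fix j assume j: "j \<in> {0..length xs'}"
          have "mcomp f g (x # take j xs') = (\<Sum>k=0..j. mcomp (F k) g (drop k (take j xs')))"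
            using j by (simp add: mcomp_Cons F_def min_def)
          then show "mcomp f g (x # take j xs') * H (drop j xs') = (\<Sum>k=0..j. mcomp (F k) g (drop k (take j xs')) * H (drop j xs'))"
            by (simp add: sum_distrib_right)
        qed simp
        also have "\<dots> = (\<Sum>k=0..length xs'. \<Sum>i=0..length xs'-k. mcomp (F k) g (drop k (take (k+i) xs')) * H (drop (k+i) xs'))"
          by (rule sum_triangle_swap)
        also have "\<dots> = (\<Sum>k=0..length xs'. mprod (mcomp (F k) g) H (drop k xs'))"
          by (simp add: mprod_def drop_take add.commute)
        finally show ?thesis by simp
      qed
      also have "f [] * H xs + mprod (\<lambda>ys. mcomp f g (x#ys)) H xs' = mprod (mcomp f g) (mcomp h g) xs"
        using Cons by (simp add: mprod_Cons H_def)
      finally show ?thesis .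
    qed
  qed
qed

lemma mcomp_mprod_app: "mcomp (mprod f h) g xs = mprod (mcomp f g) (mcomp h g) xs"
  by (simp add: mcomp_mprod)

lemma concat_concat: "concat (map concat xss) = concat (concat xss)"
  by (induction xss) auto

lemma mem_listset: "cs \<in> listset As \<longleftrightarrow> list_all2 (\<in>) cs As"
proof (induction As arbitrary: cs)
  case Nil then show ?case by auto
next
  case (Cons A As)
  show ?case
  proof (cases cs)
    case Nil then show ?thesis by (simp add: set_Cons_def)
  next
    case (Cons c cs')
    then show ?thesis by (simp add: set_Cons_def Cons.IH)
  qed
qed

lemma listset_Cons_img: "listset (A # As) = (\<lambda>(a, cs). a # cs) ` (A \<times> listset As)"
proof (intro equalityI subsetI)
  fix x assume "x \<in> listset (A # As)"
  then obtain a cs where "x = a # cs" "a \<in> A" "cs \<in> listset As" by (auto simp: set_Cons_def)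
  then show "x \<in> (\<lambda>(a, cs). a # cs) ` (A \<times> listset As)" by force
next
  fix x assume "x \<in> (\<lambda>(a, cs). a # cs) ` (A \<times> listset As)"
  then obtain a cs where "x = a # cs" "a \<in> A" "cs \<in> listset As" by auto
  then show "x \<in> listset (A # As)" by (simp add: set_Cons_def)
qed

lemma finite_listset: "(\<And>A. A \<in> set As \<Longrightarrow> finite A) \<Longrightarrow> finite (listset As)"
proof (induction As)
  case Nil then show ?case by simp
next
  case (Cons A As)
  then have "finite (A \<times> listset As)" by simp
  then show ?case by (simp only: listset_Cons_img) (rule finite_imageI)
qed

lemma sum_listset_Cons:
  assumes "finite A" "finite (listset As)"
  shows "sum F (listset (A # As)) = (\<Sum>a\<in>A. \<Sum>cs\<in>listset As. F (a # cs))"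
proof -
  have "inj_on (\<lambda>(a, cs). a # cs) (A \<times> listset As)" by (auto simp: inj_on_def)
  then have "sum F (listset (A # As)) = (\<Sum>p\<in>A \<times> listset As. F (fst p # snd p))"
    unfolding listset_Cons_img by (subst sum.reindex) (simp_all add: case_prod_beta o_def)
  also have "\<dots> = (\<Sum>a\<in>A. \<Sum>cs\<in>listset As. F (a # cs))"
    using assms by (simp add: sum.cartesian_product case_prod_beta)
  finally show ?thesis .
qed

context kal begin

lemma lf_sum_arg: "lf T \<Longrightarrow> T (sum \<phi> A) = (\<Sum>a\<in>A. T (\<phi> a))"
  by (induction A rule: infinite_finite_induct) (simp_all add: lf_zero lf_add_arg)

lemma lin_expand:
  assumes f: "lin f" and fin: "\<And>d. d \<in> set ds \<Longrightarrow> finite (A d)"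
  shows "f (xs @ map (\<lambda>d. sum \<phi> (A d)) ds) = sum (\<lambda>cs. f (xs @ map \<phi> cs)) (listset (map A ds))"
  using fin
proof (induction ds arbitrary: xs)
  case Nil then show ?case by simp
next
  case (Cons d ds)
  have fl: "finite (listset (map A ds))" using Cons.prems by (intro finite_listset) auto
  have "f (xs @ map (\<lambda>d. sum \<phi> (A d)) (d # ds)) = (\<Sum>a\<in>A d. f (xs @ \<phi> a # map (\<lambda>d. sum \<phi> (A d)) ds))"
    using lf_sum_arg[OF linD[OF f, of xs "map (\<lambda>d. sum \<phi> (A d)) ds"], of \<phi> "A d"] by simp
  also have "\<dots> = (\<Sum>a\<in>A d. \<Sum>cs\<in>listset (map A ds). f (xs @ \<phi> a # map \<phi> cs))"
    using Cons.IH[of "xs @ [\<phi> _]"] Cons.prems by simp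
  also have "\<dots> = sum (\<lambda>cs. f (xs @ map \<phi> cs)) (listset (A d # map A ds))"
    using Cons.prems fl by (subst sum_listset_Cons) auto
  also have "\<dots> = sum (\<lambda>cs. f (xs @ map \<phi> cs)) (listset (map A (d # ds)))" by simp
  finally show ?case .
qed

lemma mcomp_assoc: assumes f: "lin f" shows "mcomp (mcomp f g) h = mcomp f (mcomp g h)"
proof
  fix xs :: "'b list"
  define \<phi> where "\<phi> c = g (map h c)" for c
  define S1 where "S1 = Sigma (blocks xs) blocks"
  define S2 where "S2 = Sigma (blocks xs) (\<lambda>ds. listset (map blocks ds))"
  have "mcomp (mcomp f g) h xs = (\<Sum>cs\<in>blocks xs. \<Sum>css\<in>blocks cs. f (map \<phi> css))"
    unfolding mcomp_blocks[of "mcomp f g"] mcomp_blocks[of f g] sum_blocks_map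
    by (simp add: \<phi>_def[abs_def] o_def)
  also have "\<dots> = (\<Sum>p\<in>S1. f (map \<phi> (snd p)))"
    unfolding S1_def by (subst sum.Sigma) (simp_all add: finite_blocks case_prod_beta)
  also have "\<dots> = (\<Sum>p\<in>S2. f (map \<phi> (snd p)))"
  proof (rule sum.reindex_bij_witness[where j="\<lambda>(cs, css). (map concat css, css)" and i="\<lambda>(ds, css). (concat css, css)"])
    fix a assume "a \<in> S1"
    then obtain cs css where a: "a = (cs, css)" "concat cs = xs" "[] \<notin> set cs" "concat css = cs" "[] \<notin> set css"
      by (auto simp: S1_def blocks_def)
    show "(case case a of (cs, css) \<Rightarrow> (map concat css, css) of (ds, css) \<Rightarrow> (concat css, css)) = a"
      using a by simp
    have ne: "concat c \<noteq> []" if "c \<in> set css" for c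
    proof -
      have "c \<noteq> []" using that a by auto
      then obtain y ys where "c = y # ys" by (cases c) auto
      moreover have "y \<in> set cs" using that a \<open>c = y # ys\<close> by (auto intro!: bexI[of _ c])
      ultimately show ?thesis using a by auto
    qed
    have "list_all2 (\<in>) css (map blocks (map concat css))"
    proof (rule list_all2_all_nthI)
      fix i assume "i < length css"
      then have "css ! i \<in> set css" by simp
      then have "[] \<notin> set (css ! i)" using a by auto
      then show "css ! i \<in> map blocks (map concat css) ! i" using \<open>i < length css\<close> by (simp add: blocks_def)
    qed simp
    moreover have "[] \<notin> set (map concat css)" using ne by fastforce
    moreover have "concat (map concat css) = xs" using a by (simp add: concat_concat)
    ultimately show "(case a of (cs, css) \<Rightarrow> (map concat css, css)) \<in> S2"
      using a by (simp add: S2_def blocks_def mem_listset)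
    show "f (map \<phi> (snd (case a of (cs, css) \<Rightarrow> (map concat css, css)))) = f (map \<phi> (snd a))"
      using a by simp
  next
    fix b assume "b \<in> S2"
    then obtain ds css where b: "b = (ds, css)" "concat ds = xs" "[] \<notin> set ds" "list_all2 (\<in>) css (map blocks ds)"
      by (auto simp: S2_def blocks_def mem_listset)
    then have len: "length css = length ds" and nth: "\<And>i. i < length ds \<Longrightarrow> concat (css ! i) = ds ! i \<and> [] \<notin> set (css ! i)"
      by (auto simp: list_all2_conv_all_nth blocks_def)
    have mc: "map concat css = ds" using len nth by (intro nth_equalityI) auto
    show "(case case b of (ds, css) \<Rightarrow> (concat css, css) of (cs, css) \<Rightarrow> (map concat css, css)) = b"
      using b mc by simp
    have "[] \<notin> set css"
    proof
      assume "[] \<in> set css"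
      then obtain i where "i < length css" "css ! i = []" by (auto simp: in_set_conv_nth)
      then have "ds ! i = []" using nth len by fastforce
      then show False using b \<open>i < length css\<close> len by (metis nth_mem)
    qed
    moreover have "[] \<notin> set (concat css)"
    proof
      assume "[] \<in> set (concat css)"
      then obtain c where "c \<in> set css" "[] \<in> set c" by auto
      then obtain i where "i < length css" "css ! i = c" by (auto simp: in_set_conv_nth)
      then show False using nth len \<open>[] \<in> set c\<close> by auto
    qed
    moreover have "concat (concat css) = xs" using b mc by (simp flip: concat_concat)
    ultimately show "(case b of (ds, css) \<Rightarrow> (concat css, css)) \<in> S1"
      using b by (auto simp: S1_def blocks_def)
  qed
  also have "\<dots> = (\<Sum>ds\<in>blocks xs. \<Sum>css\<in>listset (map blocks ds). f (map \<phi> css))"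
    unfolding S2_def
    by (subst sum.Sigma) (auto simp: finite_blocks case_prod_beta intro!: finite_listset)
  also have "\<dots> = (\<Sum>ds\<in>blocks xs. f (map (\<lambda>d. sum \<phi> (blocks d)) ds))"
    by (rule sum.cong[OF refl]) (use lin_expand[OF f, of _ blocks "[]" \<phi>] in \<open>simp add: finite_blocks\<close>)
  also have "\<dots> = mcomp f (mcomp g h) xs"
  proof -
    have "mcomp g h = (\<lambda>d. sum \<phi> (blocks d))" by (simp add: fun_eq_iff mcomp_blocks \<phi>_def)
    then show ?thesis by (simp add: mcomp_blocks[of f])
  qed
  finally show "mcomp (mcomp f g) h xs = mcomp f (mcomp g h) xs" .
qed

end



lemma rinv_local:
  assumes "\<And>ys. length ys \<le> n \<Longrightarrow> h1 ys = h2 ys" "length xs \<le> n"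
  shows "rinv h1 xs = rinv h2 xs"
  using assms(2)
proof (induction "length xs" arbitrary: xs rule: less_induct)
  case less
  have s: "(\<Sum>k = 1..length xs. h1 (take k xs) * rinv h1 (drop k xs)) = (\<Sum>k = 1..length xs. h2 (take k xs) * rinv h2 (drop k xs))"
  proof (rule sum.cong)
    fix k assume k: "k \<in> {1..length xs}"
    have "length (drop k xs) < length xs" using k by auto
    then have "rinv h1 (drop k xs) = rinv h2 (drop k xs)"
      using less(1)[of "drop k xs"] less(2) by simp
    moreover have "h1 (take k xs) = h2 (take k xs)" using assms(1)[of "take k xs"] less(2) by simp
    ultimately show "h1 (take k xs) * rinv h1 (drop k xs) = h2 (take k xs) * rinv h2 (drop k xs)"
      by simp
  qed simp
  have "h1 [] = h2 []" using assms(1) by simp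
  then show ?case
    by (subst (1 2) rinv_eq) (simp only: rinvF_def s)
qed

lemma mprod_mI_left_app: "mprod mI S xs = (case xs of [] \<Rightarrow> 0 | y # ys \<Rightarrow> y * S ys)"
  by (cases xs) simp_all

definition SinvF :: "('b::ring_1 list \<Rightarrow> 'b) \<Rightarrow> ('b list \<Rightarrow> 'b) \<Rightarrow> 'b list \<Rightarrow> 'b" where
  "SinvF F S = rinv (mcomp F (mprod mI S))"

definition Sinv :: "('b::ring_1 list \<Rightarrow> 'b) \<Rightarrow> 'b list \<Rightarrow> 'b" where
  "Sinv F = (SOME S. \<forall>xs. S xs = SinvF F S xs)"

lemma SinvF_local:
  assumes "\<And>ys. length ys < length xs \<Longrightarrow> S1 ys = S2 ys"
  shows "SinvF F S1 xs = SinvF F S2 xs"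
  unfolding SinvF_def
proof (rule rinv_local[where n="length xs"])
  fix ys :: "'a list" assume ys: "length ys \<le> length xs"
  show "mcomp F (mprod mI S1) ys = mcomp F (mprod mI S2) ys"
  proof (rule mcomp_local[where n="length xs"])
    fix zs :: "'a list" assume "length zs \<le> length xs"
    then show "mprod mI S1 zs = mprod mI S2 zs"
      using assms by (cases zs) auto
  qed (use ys in auto)
qed simp

lemma Sinv_eq: "Sinv F = rinv (mcomp F (mprod mI (Sinv F)))"
proof -
  have "\<exists>S. \<forall>xs. S xs = SinvF F S xs"
    by (rule fix_exists) (rule SinvF_local)
  then have "\<forall>xs. Sinv F xs = SinvF F (Sinv F) xs" unfolding Sinv_def by (rule someI_ex)
  then show ?thesis by (simp add: fun_eq_iff SinvF_def)
qed

definition cinv :: "('b::ring_1 list \<Rightarrow> 'b) \<Rightarrow> 'b list \<Rightarrow> 'b" where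
  "cinv F = mprod mI (Sinv F)"

lemma Sinv_Nil: "Sinv F [] = binv (F [])"
  by (subst Sinv_eq) (simp add: rinv_Nil)

lemma bunit_Sinv: "bunit (F []) \<Longrightarrow> bunit (Sinv F [])"
  by (simp add: Sinv_Nil bunit_binv)

lemma cinv_Nil[simp]: "cinv F [] = 0" by (simp add: cinv_def)

lemma cinv_right: assumes "bunit (F [])" shows "mcomp (mprod mI F) (cinv F) = mI"
proof -
  let ?S = "Sinv F"
  let ?H = "mcomp F (cinv F)"
  have HN: "bunit (?H [])" using assms by simp
  have "mcomp (mprod mI F) (cinv F) = mprod (mcomp mI (cinv F)) ?H" by (rule mcomp_mprod)
  also have "\<dots> = mprod (mprod mI ?S) ?H" by (simp add: mcomp_mI_left cinv_def)
  also have "\<dots> = mprod mI (mprod (rinv ?H) ?H)"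
    by (simp add: mprod_assoc cinv_def flip: Sinv_eq)
  also have "\<dots> = mI" using rinv_left[of ?H, OF HN] by simp
  finally show ?thesis .
qed

context kal begin

lemma lin_Sinv: assumes F: "lin F" shows "lin (Sinv F)"
proof -
  let ?S = "Sinv F"
  have "lin (trunc n ?S)" for n
  proof (induction n)
    case 0 then show ?case by (simp add: lin_trunc_iff)
  next
    case (Suc n)
    define H' where "H' = trunc (Suc n) (mcomp (trunc (Suc n) F) (trunc (Suc n) (mprod mI (trunc n ?S))))"
    have linH': "lin H'" unfolding H'_def
      by (intro lin_trunc lin_mcomp lin_mprod lin_mI Suc F)
    have eq: "trunc (Suc n) ?S = trunc (Suc n) (rinv H')"
    proof
      fix xs :: "'b list"
      show "trunc (Suc n) ?S xs = trunc (Suc n) (rinv H') xs"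
      proof (cases "length xs \<le> Suc n")
        case True
        have "?S xs = rinv (mcomp F (mprod mI ?S)) xs" by (subst Sinv_eq) simp
        also have "\<dots> = rinv H' xs"
        proof (rule rinv_local[where n="Suc n"])
          fix ys :: "'b list" assume ys: "length ys \<le> Suc n"
          show "mcomp F (mprod mI ?S) ys = H' ys"
            unfolding H'_def trunc_eq[OF ys]
          proof (rule mcomp_local[where n="Suc n"])
            fix zs :: "'b list" assume zs: "length zs \<le> Suc n"
            show "mprod mI ?S zs = trunc (Suc n) (mprod mI (trunc n ?S)) zs"
              using zs by (cases zs) (auto simp: trunc_def)
          qed (use ys in \<open>auto simp: trunc_def\<close>)
        qed (use True in simp)
        finally show ?thesis using True by (simp add: trunc_def)
      qed (simp add: trunc_def)
    qed
    show ?case unfolding eq by (intro lin_trunc lin_rinv linH')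
  qed
  then have "\<forall>xs ys. length xs + length ys < n \<longrightarrow> lf (\<lambda>w. ?S (xs @ w # ys))" for n
    by (simp only: lin_trunc_iff)
  then show ?thesis unfolding lin_def
    by (meson lessI)
qed

lemma lin_cinv: "lin F \<Longrightarrow> lin (cinv F)"
  by (simp add: cinv_def lin_mprod lin_mI lin_Sinv)

lemma cinv_left: assumes F: "lin F" and u: "bunit (F [])"
  shows "mcomp (cinv F) (mprod mI F) = mI"
proof -
  let ?f = "mprod mI F" and ?g = "cinv F" and ?g' = "cinv (Sinv F)"
  have lf: "lin ?f" by (simp add: lin_mprod lin_mI F)
  have gg': "mcomp ?g ?g' = mI" unfolding cinv_def[of F] by (rule cinv_right[of "Sinv F", OF bunit_Sinv[of F, OF u]])
  have "?f = mcomp ?f mI" by (simp add: mcomp_mI_right[OF lf])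
  also have "\<dots> = mcomp ?f (mcomp ?g ?g')" by (simp add: gg')
  also have "\<dots> = mcomp (mcomp ?f ?g) ?g'" by (simp add: mcomp_assoc[OF lf])
  also have "\<dots> = ?g'" by (simp add: cinv_right[of F, OF u] mcomp_mI_left)
  finally show ?thesis using gg' by simp
qed

lemma comp_inv_unique:
  assumes "lin g1" "mcomp g1 f = mI" "mcomp f g = mI" "g [] = 0"
  shows "g1 = g"
proof -
  have "g1 = mcomp g1 mI" by (simp add: mcomp_mI_right[OF assms(1)])
  also have "\<dots> = mcomp g1 (mcomp f g)" by (simp add: assms(3))
  also have "\<dots> = mcomp (mcomp g1 f) g" by (simp add: mcomp_assoc[OF assms(1)])
  also have "\<dots> = g" by (simp add: assms(2) mcomp_mI_left[of g, OF assms(4)])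
  finally show ?thesis .
qed

lemma mcinv_eq: assumes F: "lin F" and u: "bunit (F [])"
  shows "mcinv sB (mprod mI F) = cinv F"
  unfolding mcinv_def
proof (rule the_equality)
  show "mlin sB (cinv F) \<and> cinv F [] = 0 \<and> mcomp (mprod mI F) (cinv F) = mI \<and> mcomp (cinv F) (mprod mI F) = mI"
    using lin_cinv[OF F] cinv_right[of F, OF u] cinv_left[OF F u] by (simp add: mlin_lin)
  fix g assume a: "mlin sB g \<and> g [] = 0 \<and> mcomp (mprod mI F) g = mI \<and> mcomp g (mprod mI F) = mI"
  show "g = cinv F"
  proof (rule comp_inv_unique[of g "mprod mI F" "cinv F"])
    show "lin g" using a by (simp add: mlin_lin)
  qed (use a cinv_right[of F, OF u] in auto)
qed

lemma Strans_eq: assumes F: "lin F" and u: "bunit (F [])"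
  shows "Strans sB (mprod mI F) = Sinv F"
  unfolding Strans_def mcinv_eq[OF assms]
proof (rule the_equality)
  show "cinv F = mprod mI (Sinv F)" by (simp add: cinv_def)
  fix S assume a: "cinv F = mprod mI S"
  have "mprod mI S = mprod mI (Sinv F)" using a unfolding cinv_def by (rule sym)
  then show "S = Sinv F" by (rule mprod_mI_cancel)
qed

end



lemma left_inv_unique:
  assumes "mprod h g = mone" "mprod g' h = mone"
  shows "g' = g"
proof -
  have "g' = mprod g' mone" by simp
  also have "\<dots> = mprod g' (mprod h g)" by (simp only: assms(1))
  also have "\<dots> = mprod (mprod g' h) g" by (simp only: mprod_assoc)
  also have "\<dots> = g" by (simp only: assms(2) mprod_mone_left)
  finally show ?thesis .
qed

context kal begin

lemma part1:
  assumes K: "lin K" and u: "bunit (K [])"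
  shows "mprod (mprod (minv sB (Strans sB (mprod mI K))) mI) (Strans sB (mprod mI K))
       = mcomp (mprod K mI) (mcinv sB (mprod mI K))"
proof -
  let ?S = "Sinv K"
  let ?\<psi> = "cinv K"
  let ?G = "mcomp K ?\<psi>"
  have linS: "lin ?S" by (rule lin_Sinv[OF K])
  have uS: "bunit (?S [])" by (rule bunit_Sinv[of K, OF u])
  have "mprod mI (mprod ?S ?G) = mprod mI mone"
  proof -
    have "mprod mI (mprod ?S ?G) = mprod ?\<psi> ?G" by (simp only: cinv_def mprod_assoc)
    also have "\<dots> = mprod (mcomp mI ?\<psi>) ?G" by (simp only: mcomp_mI_left[of ?\<psi>] cinv_Nil)
    also have "\<dots> = mcomp (mprod mI K) ?\<psi>" by (simp only: mcomp_mprod)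
    also have "\<dots> = mI" by (rule cinv_right[of K, OF u])
    finally show ?thesis by simp
  qed
  then have SG: "mprod ?S ?G = mone" by (rule mprod_mI_cancel)
  have rG: "rinv ?S = ?G" using left_inv_unique[OF SG rinv_left[of ?S, OF uS]] .
  have "mcomp (mprod K mI) ?\<psi> = mprod ?G (mcomp mI ?\<psi>)" by (simp only: mcomp_mprod)
  also have "\<dots> = mprod ?G ?\<psi>" by (simp only: mcomp_mI_left[of ?\<psi>] cinv_Nil)
  also have "\<dots> = mprod (mprod (rinv ?S) mI) ?S" by (simp only: rG cinv_def mprod_assoc)
  finally show ?thesis
    by (simp only: Strans_eq[OF K u] mcinv_eq[OF K u] minv_eq[OF linS uS])
qed

lemma part2:
  assumes K: "lin K" and uK: "bunit (K [])" and M: "lin M" and uM: "bunit (M [])"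
    and N: "N = (\<lambda>xs. mone xs + mprod M mI xs)"
    and MK: "M = mprod N (mcomp K (mprod mI N))"
  shows "mcomp (mprod K mI) (mcinv sB (mprod mI K)) = mcomp (mprod M mI) (mcinv sB (mprod mI M))"
proof -
  let ?\<Phi> = "mprod mI N"
  let ?G = "mcomp K ?\<Phi>"
  let ?X = "mprod ?G mI"
  have linN: "lin N" unfolding N by (intro lin_add lin_mone lin_mprod M lin_mI)
  have N0: "N [] = 1" by (simp add: N)
  have uN: "bunit (N [])" by (simp add: N0)
  have linPhi: "lin ?\<Phi>" by (intro lin_mprod lin_mI linN)
  have Phi0: "?\<Phi> [] = 0" by simp
  have linKI: "lin (mprod K mI)" by (intro lin_mprod lin_mI K)
  have linMI: "lin (mprod M mI)" by (intro lin_mprod lin_mI M)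
  have linIK: "lin (mprod mI K)" by (intro lin_mprod lin_mI K)
  have A: "mprod mI M = mcomp (mprod mI K) ?\<Phi>"
  proof -
    have "mprod mI M = mprod mI (mprod N ?G)" by (subst MK) (rule refl)
    also have "\<dots> = mprod ?\<Phi> ?G" by (simp only: mprod_assoc)
    also have "\<dots> = mprod (mcomp mI ?\<Phi>) ?G" by (simp only: mcomp_mI_left[of ?\<Phi>, OF Phi0])
    also have "\<dots> = mcomp (mprod mI K) ?\<Phi>" by (simp only: mcomp_mprod)
    finally show ?thesis .
  qed
  let ?\<phi> = "cinv N" and ?\<psi> = "cinv K" and ?\<chi> = "cinv M"
  have B: "mcomp ?\<phi> ?\<psi> = ?\<chi>"
  proof (rule comp_inv_unique)
    show "lin (mcomp ?\<phi> ?\<psi>)" by (intro lin_mcomp lin_cinv linN K)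
    show "mcomp (mprod mI M) ?\<chi> = mI" by (rule cinv_right[of M, OF uM])
    show "?\<chi> [] = 0" by simp
    have "mcomp (mcomp ?\<phi> ?\<psi>) (mprod mI M) = mcomp ?\<phi> (mcomp ?\<psi> (mcomp (mprod mI K) ?\<Phi>))"
      by (simp only: mcomp_assoc[OF lin_cinv[OF linN]] A)
    also have "\<dots> = mcomp ?\<phi> (mcomp (mcomp ?\<psi> (mprod mI K)) ?\<Phi>)"
      by (simp only: mcomp_assoc[OF lin_cinv[OF K]])
    also have "\<dots> = mI"
      by (simp only: cinv_left[OF K uK] mcomp_mI_left[of ?\<Phi>, OF Phi0] cinv_left[OF linN uN])
    finally show "mcomp (mcomp ?\<phi> ?\<psi>) (mprod mI M) = mI" .
  qed
  have C: "mprod M mI = mcomp (mprod K mI) ?\<Phi>"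
  proof -
    have MX: "mprod M mI = mprod N ?X" by (subst MK) (simp only: mprod_assoc)
    have NX: "N xs = mone xs + mprod N ?X xs" for xs
    proof -
      have "N xs = mone xs + mprod M mI xs" by (simp add: N)
      then show ?thesis by (simp only: MX)
    qed
    define Y where "Y = (\<lambda>xs. mone xs - ?X xs)"
    have NY: "mprod N Y = mone"
    proof
      fix xs show "mprod N Y xs = mone xs"
        unfolding Y_def mprod_diff_right using NX[of xs] by simp
    qed
    have uY: "bunit (Y [])" by (simp add: Y_def)
    have "N = rinv Y" by (rule left_inv_unique[OF rinv_right[of Y, OF uY] NY])
    then have YN: "mprod Y N = mone" using rinv_right[of Y, OF uY] by simp
    have XN: "mprod ?X N xs = mprod N ?X xs" for xs
    proof -
      have h: "N xs - mprod ?X N xs = mone xs" using fun_cong[OF YN, of xs]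
        unfolding Y_def mprod_diff_left by simp
      have "mprod ?X N xs = N xs - (N xs - mprod ?X N xs)" by simp
      also have "\<dots> = N xs - mone xs" by (simp only: h)
      also have "\<dots> = mprod N ?X xs" using NX[of xs] by simp
      finally show ?thesis .
    qed
    have "mcomp (mprod K mI) ?\<Phi> = mprod ?G (mcomp mI ?\<Phi>)" by (simp only: mcomp_mprod)
    also have "\<dots> = mprod ?X N" by (simp only: mcomp_mI_left[of ?\<Phi>, OF Phi0] mprod_assoc)
    also have "\<dots> = mprod N ?X" using XN by (simp add: fun_eq_iff)
    finally show ?thesis using MX by simp
  qed
  have "mcomp (mprod M mI) ?\<chi> = mcomp (mcomp (mprod M mI) ?\<phi>) ?\<psi>"
    by (simp only: mcomp_assoc[OF linMI] B[symmetric])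
  also have "mcomp (mprod M mI) ?\<phi> = mprod K mI"
    by (simp only: C mcomp_assoc[OF linKI] cinv_right[of N, OF uN] mcomp_mI_right[OF linKI])
  finally show ?thesis
    by (simp only: mcinv_eq[OF K uK] mcinv_eq[OF M uM])
qed

end



section \<open>Trees\<close>

definition trees :: "nat \<Rightarrow> ptree set" where
  "trees n = {\<tau>. tsize \<tau> = n}"

fun spl :: "ptree \<Rightarrow> nat" where
  "spl Lf = 0"
| "spl (Nd l r) = Suc (spl r)"

fun comb :: "nat \<Rightarrow> ptree" where
  "comb 0 = Lf"
| "comb (Suc n) = Nd Lf (comb n)"

lemma tsize_comb[simp]: "tsize (comb n) = n"
  by (induction n) auto

lemma spl_le: "spl \<tau> \<le> tsize \<tau>"
  by (induction \<tau>) auto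

lemma spl_eq: "spl \<tau> = tsize \<tau> \<longleftrightarrow> \<tau> = comb (tsize \<tau>)"
proof (induction \<tau>)
  case Lf then show ?case by simp
next
  case (Nd l r)
  show ?case
  proof
    assume a: "spl (Nd l r) = tsize (Nd l r)"
    have "spl r \<le> tsize r" by (rule spl_le)
    with a have "tsize l = 0" "spl r = tsize r" by auto
    then have "l = Lf" by (cases l) auto
    moreover have "r = comb (tsize r)" using Nd.IH(2) \<open>spl r = tsize r\<close> by simp
    ultimately show "Nd l r = comb (tsize (Nd l r))" using \<open>tsize l = 0\<close> by simp
  next
    assume h: "Nd l r = comb (tsize (Nd l r))"
    then have "l = Lf" by simp
    with h have "r = comb (tsize r)" by simp
    then show "spl (Nd l r) = tsize (Nd l r)" using Nd.IH(2) \<open>l = Lf\<close> by simp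
  qed
qed

lemma trees_0[simp]: "trees 0 = {Lf}"
proof -
  have "tsize \<tau> = 0 \<longleftrightarrow> \<tau> = Lf" for \<tau> by (cases \<tau>) auto
  then show ?thesis by (auto simp: trees_def)
qed

lemma trees_Suc: "trees (Suc n) = (\<Union>j\<in>{0..n}. (\<lambda>(l, r). Nd l r) ` (trees j \<times> trees (n - j)))"
proof (intro equalityI subsetI)
  fix \<tau> assume "\<tau> \<in> trees (Suc n)"
  then obtain l r where "\<tau> = Nd l r" "tsize l + tsize r = n" by (cases \<tau>) (auto simp: trees_def)
  then show "\<tau> \<in> (\<Union>j\<in>{0..n}. (\<lambda>(l, r). Nd l r) ` (trees j \<times> trees (n - j)))"
    by (auto simp: trees_def image_iff intro!: bexI[of _ "tsize l"])
next
  fix \<tau> assume "\<tau> \<in> (\<Union>j\<in>{0..n}. (\<lambda>(l, r). Nd l r) ` (trees j \<times> trees (n - j)))"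
  then show "\<tau> \<in> trees (Suc n)" by (auto simp: trees_def)
qed

lemma finite_trees: "finite (trees n)"
proof (induction n rule: less_induct)
  case (less n)
  show ?case
  proof (cases n)
    case 0 then show ?thesis by simp
  next
    case (Suc m)
    have "finite (trees j \<times> trees (m - j))" if "j \<le> m" for j
      using less Suc that by auto
    then show ?thesis unfolding Suc trees_Suc by auto
  qed
qed

lemma sum_trees_Suc:
  "sum F (trees (Suc n)) = (\<Sum>j=0..n. \<Sum>l\<in>trees j. \<Sum>r\<in>trees (n - j). F (Nd l r))"
proof -
  have "sum F (trees (Suc n)) = (\<Sum>j=0..n. sum F ((\<lambda>(l, r). Nd l r) ` (trees j \<times> trees (n - j))))"
    unfolding trees_Suc
  proof (rule sum.UNION_disjoint)
    show "\<forall>i\<in>{0..n}. finite ((\<lambda>(l, r). Nd l r) ` (trees i \<times> trees (n - i)))"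
      by (simp add: finite_trees)
    show "\<forall>i\<in>{0..n}. \<forall>j\<in>{0..n}. i \<noteq> j \<longrightarrow> (\<lambda>(l, r). Nd l r) ` (trees i \<times> trees (n - i)) \<inter> (\<lambda>(l, r). Nd l r) ` (trees j \<times> trees (n - j)) = {}"
      by (auto simp: trees_def)
  qed simp
  also have "\<dots> = (\<Sum>j=0..n. \<Sum>l\<in>trees j. \<Sum>r\<in>trees (n - j). F (Nd l r))"
  proof (rule sum.cong[OF refl])
    fix j
    have "inj_on (\<lambda>(l, r). Nd l r) (trees j \<times> trees (n - j))" by (auto simp: inj_on_def)
    then have "sum F ((\<lambda>(l, r). Nd l r) ` (trees j \<times> trees (n - j))) = (\<Sum>p\<in>trees j \<times> trees (n - j). F (Nd (fst p) (snd p)))"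
      by (subst sum.reindex) (simp_all add: case_prod_beta o_def)
    also have "\<dots> = (\<Sum>l\<in>trees j. \<Sum>r\<in>trees (n - j). F (Nd l r))"
      by (simp add: sum.cartesian_product case_prod_beta finite_trees)
    finally show "sum F ((\<lambda>(l, r). Nd l r) ` (trees j \<times> trees (n - j))) = (\<Sum>l\<in>trees j. \<Sum>r\<in>trees (n - j). F (Nd l r))" .
  qed
  finally show ?thesis .
qed

lemma length_kblocks[simp]: "length (kblocks kap la \<tau> as) = spl \<tau>"
  by (induction \<tau> arbitrary: as) auto

lemma ktree_Nd_kblocks: "ktree kap la (Nd l r) as = kap (kblocks kap la (Nd l r) as)"
  by simp

lemma kblocks_cong:
  assumes "\<And>ys. length ys \<le> m \<Longrightarrow> k1 ys = k2 ys" "tsize \<tau> \<le> Suc m"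
  shows "kblocks k1 la \<tau> as = kblocks k2 la \<tau> as"
  using assms(2)
proof (induction \<tau> arbitrary: as)
  case Lf then show ?case by simp
next
  case (Nd l r)
  have "ktree k1 la l xs = ktree k2 la l xs" for xs
  proof (cases l)
    case Lf then show ?thesis by simp
  next
    case (Nd l1 l2)
    have "kblocks k1 la l xs = kblocks k2 la l xs" using Nd.IH(1) Nd.prems by simp
    moreover have "spl l \<le> m" using spl_le[of l] Nd.prems by simp
    ultimately show ?thesis using Nd assms(1)[of "kblocks k2 la l xs"] by simp
  qed
  moreover have "kblocks k1 la r xs = kblocks k2 la r xs" for xs using Nd.IH(2) Nd.prems by simp
  ultimately show ?case by simp
qed

lemma ktree_cong:
  assumes "\<And>ys. length ys \<le> m \<Longrightarrow> k1 ys = k2 ys" "tsize \<tau> \<le> Suc m" "spl \<tau> \<le> m"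
  shows "ktree k1 la \<tau> as = ktree k2 la \<tau> as"
proof (cases \<tau>)
  case Lf then show ?thesis by simp
next
  case (Nd l r)
  have "kblocks k1 la \<tau> as = kblocks k2 la \<tau> as" by (rule kblocks_cong[OF assms(1,2)])
  then show ?thesis using Nd assms(1)[of "kblocks k2 la \<tau> as"] assms(3) by simp
qed

lemma noncomb_spl: "\<tau> \<in> trees n - {comb n} \<Longrightarrow> spl \<tau> < n"
  using spl_le[of \<tau>] spl_eq[of \<tau>] by (auto simp: trees_def)

lemma comb_in_trees: "comb n \<in> trees n" by (simp add: trees_def)

section \<open>The probability space\<close>

locale bp =
  fixes sB :: "'k::field_char_0 \<Rightarrow> 'b::ring_1 \<Rightarrow> 'b"
    and sA :: "'k \<Rightarrow> 'a::ring_1 \<Rightarrow> 'a"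
    and la :: "'b \<Rightarrow> 'a \<Rightarrow> 'a" and ra :: "'a \<Rightarrow> 'b \<Rightarrow> 'a"
    and E :: "'a \<Rightarrow> 'b"
  assumes bps: "bprob_space sB sA la ra E"
begin

lemma kalgB: "kalg sB" using bps by (simp add: bprob_space_def)
lemma kalgA: "kalg sA" using bps by (simp add: bprob_space_def)

sublocale kal sB by (unfold_locales) (rule kalgB)

lemma la_addB: "la (x + y) a = la x a + la y a" using bps by (simp add: bprob_space_def)
lemma la_addA: "la x (a + b) = la x a + la x b" using bps by (simp add: bprob_space_def)
lemma la_sB: "la (sB c x) a = sA c (la x a)" using bps by (simp add: bprob_space_def)
lemma la_sA: "la x (sA c a) = sA c (la x a)" using bps by (simp add: bprob_space_def)
lemma la_one: "la 1 a = a" using bps by (simp add: bprob_space_def)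
lemma ra_one: "ra a 1 = a" using bps by (simp add: bprob_space_def)
lemma la_mult: "la (x * y) a = la x (la y a)" using bps by (simp add: bprob_space_def)
lemma la_Amult: "la x (a * b) = la x a * b" using bps by (simp add: bprob_space_def)
lemma ra_la: "ra a x * b = a * la x b" using bps by (simp add: bprob_space_def)
lemma E_add: "E (a + b) = E a + E b" using bps by (simp add: bprob_space_def)
lemma E_sA: "E (sA c a) = sB c (E a)" using bps by (simp add: bprob_space_def)
lemma E_one: "E 1 = 1" using bps by (simp add: bprob_space_def)
lemma E_bimod: "E (la x (ra a y)) = x * E a * y" using bps by (simp add: bprob_space_def)

lemma sA_add: "sA c (x + y) = sA c x + sA c y" using kalgA by (simp add: kalg_def)
lemma sA_ml: "sA c (x * y) = sA c x * y" using kalgA unfolding kalg_def by blast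
lemma sA_mr: "sA c (x * y) = x * sA c y" using kalgA unfolding kalg_def by blast

lemma E_la: "E (la x a) = x * E a"
  using E_bimod[of x a 1] by (simp add: ra_one)

lemma la_zeroB: "la 0 a = 0" using la_addB[of 0 0 a] by simp
lemma la_sumB: "la (sum f A) a = (\<Sum>i\<in>A. la (f i) a)"
  by (induction A rule: infinite_finite_induct) (simp_all add: la_zeroB la_addB)

definition lfA :: "('a \<Rightarrow> 'b) \<Rightarrow> bool" where
  "lfA T \<longleftrightarrow> (\<forall>c u v. T (sA c u + v) = sB c (T u) + T v)"
definition lfAA :: "('a \<Rightarrow> 'a) \<Rightarrow> bool" where
  "lfAA T \<longleftrightarrow> (\<forall>c u v. T (sA c u + v) = sA c (T u) + T v)"

lemma lfA_sum: "(\<And>i. i \<in> I \<Longrightarrow> lfA (T i)) \<Longrightarrow> lfA (\<lambda>w. \<Sum>i\<in>I. T i w)"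
  unfolding lfA_def
  by (induction I rule: infinite_finite_induct) (simp_all add: sB_add algebra_simps)

lemma lfA_diff: "lfA T \<Longrightarrow> lfA U \<Longrightarrow> lfA (\<lambda>w. T w - U w)"
  by (simp add: lfA_def sB_diff algebra_simps)

lemma lfA_E_comp: "lfAA T \<Longrightarrow> lfA (\<lambda>w. E (T w))"
  by (simp add: lfA_def lfAA_def E_add E_sA)

lemma lfAA_la: "lfAA (la t)"
  by (simp add: lfAA_def la_addA la_sA)

lemma lfAA_la_B: "lfA T \<Longrightarrow> lfAA (\<lambda>w. la (T w) z)"
  by (simp add: lfAA_def lfA_def la_addB la_sB)

lemma lfAA_prod: "lfAA (\<lambda>w. prod_list (xs @ w # ys))"
  unfolding lfAA_def
proof (intro allI)
  fix c u v
  let ?P = "prod_list xs" and ?Q = "prod_list ys"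
  have "sA c (?P * (u * ?Q)) = ?P * (sA c u * ?Q)" by (simp only: sA_mr[of c ?P] sA_ml[of c u ?Q])
  then show "prod_list (xs @ (sA c u + v) # ys) = sA c (prod_list (xs @ u # ys)) + prod_list (xs @ v # ys)"
    by (simp add: distrib_left distrib_right)
qed

definition linA_le :: "nat \<Rightarrow> ('a list \<Rightarrow> 'b) \<Rightarrow> bool" where
  "linA_le m kap \<longleftrightarrow> (\<forall>ys zs. length ys + length zs + 1 \<le> m \<longrightarrow> lfA (\<lambda>w. kap (ys @ w # zs)))"

lemma linA_compose:
  assumes "linA_le m kap" "length P + length Q + 1 \<le> m" "lfAA e"
  shows "lfA (\<lambda>w. kap (P @ e w # Q))"
  using assms unfolding linA_le_def lfA_def lfAA_def by simp

lemma kblocks_lin: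
  assumes lin: "linA_le m kap"
  shows "tsize \<tau> \<le> Suc m \<Longrightarrow> length xs + length ys + 1 = tsize \<tau> \<Longrightarrow>
    \<exists>P Q e. (\<forall>w. kblocks kap la \<tau> (xs @ w # ys) = P @ e w # Q) \<and> length P + length Q + 1 = spl \<tau> \<and> lfAA e"
proof (induction \<tau> arbitrary: xs ys)
  case Lf then show ?case by simp
next
  case (Nd l r)
  let ?j = "tsize l"
  show ?case
  proof (cases "length xs < ?j")
    case True
    let ?ys' = "take (?j - length xs - 1) ys"
    have tk: "take ?j (xs @ w # ys) = xs @ w # ?ys'" for w using True by (simp only: take_app_Cons) simp
    have nt: "(xs @ w # ys) ! ?j = ys ! (?j - length xs - 1)" for w using True
      by (simp add: nth_append)
    have dr: "drop (?j + 1) (xs @ w # ys) = drop (?j - length xs) ys" for w using True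
      by (simp only: drop_app_Cons) simp
    obtain l1 l2 where l: "l = Nd l1 l2" using True by (cases l) auto
    have "length xs + length ?ys' + 1 = tsize l" using True Nd.prems by auto
    then obtain P' Q' e' where e': "\<forall>w. kblocks kap la l (xs @ w # ?ys') = P' @ e' w # Q'"
      "length P' + length Q' + 1 = spl l" "lfAA e'"
      using Nd.IH(1)[of xs ?ys'] Nd.prems by auto
    have "spl l \<le> m" using spl_le[of l] Nd.prems by simp
    then have "lfA (\<lambda>w. kap (P' @ e' w # Q'))" using linA_compose[OF lin _ e'(3)] e'(2) by simp
    then have "lfA (\<lambda>w. ktree kap la l (xs @ w # ?ys'))" using e'(1) l by simp
    then have "lfAA (\<lambda>w. la (ktree kap la l (xs @ w # ?ys')) (ys ! (?j - length xs - 1)))" by (rule lfAA_la_B)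
    moreover have "length (kblocks kap la r (drop (?j - length xs) ys)) = spl r" by simp
    moreover have "kblocks kap la (Nd l r) (xs @ w # ys) = [] @ la (ktree kap la l (xs @ w # ?ys')) (ys ! (?j - length xs - 1)) # kblocks kap la r (drop (?j - length xs) ys)" for w
      by (simp only: kblocks.simps tk nt dr append_Nil)
    ultimately show ?thesis
      by (intro exI[of _ "[]"] exI[of _ "kblocks kap la r (drop (?j - length xs) ys)"]
        exI[of _ "\<lambda>w. la (ktree kap la l (xs @ w # ?ys')) (ys ! (?j - length xs - 1))"] conjI allI) simp_all
  next
    case False
    show ?thesis
    proof (cases "length xs = ?j")
      case True
      have tk: "take ?j (xs @ w # ys) = xs" for w using True by simp
      have nt: "(xs @ w # ys) ! ?j = w" for w using True[symmetric] by simp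
      have dr: "drop (?j + 1) (xs @ w # ys) = ys" for w using True[symmetric] by simp
      have "kblocks kap la (Nd l r) (xs @ w # ys) = [] @ la (ktree kap la l xs) w # kblocks kap la r ys" for w
        by (simp only: kblocks.simps tk nt dr append_Nil)
      then show ?thesis
        by (intro exI[of _ "[]"] exI[of _ "kblocks kap la r ys"] exI[of _ "la (ktree kap la l xs)"] conjI allI)
          (simp_all add: lfAA_la)
    next
      case False2: False
      with False have lt: "?j < length xs" by simp
      have tk: "take ?j (xs @ w # ys) = take ?j xs" for w using lt by simp
      have nt: "(xs @ w # ys) ! ?j = xs ! ?j" for w using lt by (simp add: nth_append)
      have dr: "drop (Suc ?j) (xs @ w # ys) = drop (Suc ?j) xs @ w # ys" for w using lt by simp
      have "length (drop (Suc ?j) xs) + length ys + 1 = tsize r" using lt Nd.prems by auto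
      then obtain P' Q' e' where e': "\<forall>w. kblocks kap la r (drop (Suc ?j) xs @ w # ys) = P' @ e' w # Q'"
        "length P' + length Q' + 1 = spl r" "lfAA e'"
        using Nd.IH(2)[of "drop (Suc ?j) xs" ys] Nd.prems by auto
      have dr': "drop (?j + 1) (xs @ w # ys) = drop (Suc ?j) xs @ w # ys" for w using dr by simp
      have kb: "kblocks kap la (Nd l r) (xs @ w # ys) = (la (ktree kap la l (take ?j xs)) (xs ! ?j) # P') @ e' w # Q'" for w
        by (simp only: kblocks.simps tk nt dr' e'(1)[rule_format] append_Cons)
      have "length (la (ktree kap la l (take ?j xs)) (xs ! ?j) # P') + length Q' + 1 = spl (Nd l r)"
        using e'(2) by simp
      with kb e'(3) show ?thesis by blast
    qed
  qed
qed

lemma ktree_lin: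
  assumes lin: "linA_le m kap" and "tsize \<tau> \<le> Suc m" "spl \<tau> \<le> m" "\<tau> \<noteq> Lf"
    and "length xs + length ys + 1 = tsize \<tau>"
  shows "lfA (\<lambda>w. ktree kap la \<tau> (xs @ w # ys))"
proof -
  obtain P Q e where e: "\<forall>w. kblocks kap la \<tau> (xs @ w # ys) = P @ e w # Q" "length P + length Q + 1 = spl \<tau>" "lfAA e"
    using kblocks_lin[OF lin assms(2,5)] by blast
  obtain l r where t: "\<tau> = Nd l r" using assms(4) by (cases \<tau>) auto
  have "lfA (\<lambda>w. kap (P @ e w # Q))" using linA_compose[OF lin _ e(3)] e(2) assms(3) by simp
  then show ?thesis using e(1) t by (simp only: ktree_Nd_kblocks)
qed

definition leftlin_le :: "nat \<Rightarrow> ('a list \<Rightarrow> 'b) \<Rightarrow> bool" where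
  "leftlin_le m kap \<longleftrightarrow> (\<forall>b x rest. length rest < m \<longrightarrow> kap (la b x # rest) = b * kap (x # rest))"

lemma ktree_leftlin:
  assumes ll: "leftlin_le m kap"
  shows "\<tau> \<noteq> Lf \<Longrightarrow> tsize \<tau> \<le> Suc m \<Longrightarrow> spl \<tau> \<le> m \<Longrightarrow>
    ktree kap la \<tau> (la b x # rest) = b * ktree kap la \<tau> (x # rest)"
proof (induction \<tau> arbitrary: rest)
  case Lf then show ?case by simp
next
  case (Nd l r)
  have len: "length (kblocks kap la r (drop (tsize l) rest)) < m" using Nd.prems by simp
  show ?case
  proof (cases l)
    case Lf
    then show ?thesis using ll len by (simp add: la_one leftlin_le_def)
  next
    case (Nd l1 l2)
    obtain j' where j': "tsize l = Suc j'" using Nd by (cases "tsize l") auto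
    let ?K = "kblocks kap la r (drop (Suc j') rest)"
    let ?t = "ktree kap la l (x # take j' rest)"
    have IHl: "ktree kap la l (la b x # take j' rest) = b * ?t"
      using Nd.IH(1)[of "take j' rest"] Nd.prems \<open>l = Nd l1 l2\<close> spl_le[of l] by simp
    have lK: "length ?K < m" using len j' by simp
    have "ktree kap la (Nd l r) (la b x # rest) = kap (la (ktree kap la l (la b x # take j' rest)) (rest ! j') # ?K)"
      using j' by simp
    also have "\<dots> = kap (la b (la ?t (rest ! j')) # ?K)" by (simp only: IHl la_mult)
    also have "\<dots> = b * kap (la ?t (rest ! j') # ?K)" using ll lK by (simp add: leftlin_le_def)
    also have "\<dots> = b * ktree kap la (Nd l r) (x # rest)" using j' by simp
    finally show ?thesis .
  qed
qed

section \<open>Cumulants\<close>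

definition cumF :: "('a list \<Rightarrow> 'b) \<Rightarrow> 'a list \<Rightarrow> 'b" where
  "cumF kap as = (if as = [] then 0 else E (prod_list as) - (\<Sum>\<tau>\<in>trees (length as) - {comb (length as)}. ktree kap la \<tau> as))"

lemma cumF_local:
  assumes "\<And>ys. length ys < length as \<Longrightarrow> k1 ys = k2 ys"
  shows "cumF k1 as = cumF k2 as"
proof (cases as)
  case Nil then show ?thesis by (simp add: cumF_def)
next
  case (Cons a as')
  have "ktree k1 la \<tau> as = ktree k2 la \<tau> as" if "\<tau> \<in> trees (length as) - {comb (length as)}" for \<tau>
  proof (rule ktree_cong[where m="length as'"])
    show "length ys \<le> length as' \<Longrightarrow> k1 ys = k2 ys" for ys using assms Cons by simp
    show "tsize \<tau> \<le> Suc (length as')" using that Cons by (simp add: trees_def)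
    show "spl \<tau> \<le> length as'" using noncomb_spl[OF that] Cons by simp
  qed
  then have "(\<Sum>\<tau>\<in>trees (length as) - {comb (length as)}. ktree k1 la \<tau> as) = (\<Sum>\<tau>\<in>trees (length as) - {comb (length as)}. ktree k2 la \<tau> as)"
    by (rule sum.cong[OF refl])
  then show ?thesis unfolding cumF_def by simp
qed

definition cum :: "'a list \<Rightarrow> 'b" where
  "cum = (SOME kap. \<forall>as. kap as = cumF kap as)"

lemma cum_eq: "cum as = cumF cum as"
proof -
  have "\<exists>kap. \<forall>as. kap as = cumF kap as" by (rule fix_exists) (rule cumF_local)
  then have "\<forall>as. cum as = cumF cum as" unfolding cum_def by (rule someI_ex)
  then show ?thesis by blast
qed

lemma cum_Nil: "cum [] = 0" by (subst cum_eq) (simp add: cumF_def)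

lemma ktree_comb: "length as = Suc n \<Longrightarrow> ktree kap la (comb (Suc n)) as = kap as"
proof -
  have kb: "\<forall>bs. length bs = k \<longrightarrow> kblocks kap la (comb k) bs = bs" for k
  proof (induction k)
    case 0 then show ?case by simp
  next
    case (Suc k)
    show ?case
    proof (intro allI impI)
      fix bs :: "'a list" assume "length bs = Suc k"
      then obtain b bs' where "bs = b # bs'" "length bs' = k" by (cases bs) auto
      then show "kblocks kap la (comb (Suc k)) bs = bs" using Suc by (simp add: la_one)
    qed
  qed
  assume "length as = Suc n"
  then have "kblocks kap la (comb (Suc n)) as = as" using kb[of "Suc n"] by blast
  then show ?thesis by (simp only: comb.simps ktree_Nd_kblocks)
qed

lemma sum_trees_split:
  assumes "as \<noteq> []"
  shows "(\<Sum>\<tau>\<in>trees (length as). ktree kap la \<tau> as) = kap as + (\<Sum>\<tau>\<in>trees (length as) - {comb (length as)}. ktree kap la \<tau> as)"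
proof -
  obtain n where n: "length as = Suc n" using assms by (cases as) auto
  have "(\<Sum>\<tau>\<in>trees (length as). ktree kap la \<tau> as) = ktree kap la (comb (length as)) as + (\<Sum>\<tau>\<in>trees (length as) - {comb (length as)}. ktree kap la \<tau> as)"
    by (rule sum.remove[OF finite_trees comb_in_trees])
  then show ?thesis using ktree_comb[OF n] n by simp
qed

lemma cum_def_eq: "E (prod_list as) = (\<Sum>\<tau>\<in>trees (length as). ktree cum la \<tau> as)"
proof (cases "as = []")
  case True then show ?thesis by (simp add: E_one)
next
  case False
  show ?thesis using cum_eq[of as] False by (simp add: sum_trees_split cumF_def)
qed

lemma cumulants_eq: "cumulants la E = cum"
  unfolding cumulants_def
proof (rule the_equality)
  show "cum [] = 0 \<and> (\<forall>as. E (prod_list as) = (\<Sum>\<tau>\<in>{\<tau>. tsize \<tau> = length as}. ktree cum la \<tau> as))"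
    using cum_Nil cum_def_eq by (simp add: trees_def)
  fix kap assume a: "kap [] = 0 \<and> (\<forall>as. E (prod_list as) = (\<Sum>\<tau>\<in>{\<tau>. tsize \<tau> = length as}. ktree kap la \<tau> as))"
  have "kap as = cum as" for as
  proof (induction "length as" arbitrary: as rule: less_induct)
    case less
    show ?case
    proof (cases as)
      case Nil then show ?thesis using a cum_Nil by simp
    next
      case (Cons a' as')
      have "(\<Sum>\<tau>\<in>trees (length as) - {comb (length as)}. ktree kap la \<tau> as) = (\<Sum>\<tau>\<in>trees (length as) - {comb (length as)}. ktree cum la \<tau> as)"
      proof (rule sum.cong[OF refl], rule ktree_cong[where m="length as'"])
        fix \<tau> assume t: "\<tau> \<in> trees (length as) - {comb (length as)}"
        show "length ys \<le> length as' \<Longrightarrow> kap ys = cum ys" for ys using less Cons by simp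
        show "tsize \<tau> \<le> Suc (length as')" using t Cons by (simp add: trees_def)
        show "spl \<tau> \<le> length as'" using noncomb_spl[OF t] Cons by simp
      qed
      moreover have "E (prod_list as) = kap as + (\<Sum>\<tau>\<in>trees (length as) - {comb (length as)}. ktree kap la \<tau> as)"
      proof -
        have "E (prod_list as) = (\<Sum>\<tau>\<in>trees (length as). ktree kap la \<tau> as)"
          using a by (simp add: trees_def)
        then show ?thesis using sum_trees_split[of as kap] Cons by simp
      qed
      moreover have "E (prod_list as) = cum as + (\<Sum>\<tau>\<in>trees (length as) - {comb (length as)}. ktree cum la \<tau> as)"
        using cum_def_eq[of as] Cons sum_trees_split[of as cum] by simp
      ultimately show ?thesis by (metis add_right_cancel)
    qed
  qed
  then show "kap = cum" by auto
qed

lemma cum_lin: "linA_le n cum"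
proof (induction n)
  case 0 then show ?case by (simp add: linA_le_def)
next
  case (Suc n)
  show ?case unfolding linA_le_def
  proof (intro allI impI)
    fix ys zs :: "'a list" assume len: "length ys + length zs + 1 \<le> Suc n"
    show "lfA (\<lambda>w. cum (ys @ w # zs))"
    proof (cases "length ys + length zs + 1 \<le> n")
      case True then show ?thesis using Suc by (simp add: linA_le_def)
    next
      case False
      then have L: "length ys + length zs + 1 = Suc n" using len by simp
      have "lfA (\<lambda>w. E (prod_list (ys @ w # zs)) - (\<Sum>\<tau>\<in>trees (Suc n) - {comb (Suc n)}. ktree cum la \<tau> (ys @ w # zs)))"
      proof (intro lfA_diff lfA_E_comp lfAA_prod lfA_sum)
        fix \<tau> assume t: "\<tau> \<in> trees (Suc n) - {comb (Suc n)}"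
        show "lfA (\<lambda>w. ktree cum la \<tau> (ys @ w # zs))"
        proof (rule ktree_lin[OF Suc.IH])
          show "tsize \<tau> \<le> Suc n" using t by (simp add: trees_def)
          show "spl \<tau> \<le> n" using noncomb_spl[OF t] by simp
          show "\<tau> \<noteq> Lf" using t by (auto simp: trees_def)
          show "length ys + length zs + 1 = tsize \<tau>" using t L by (simp add: trees_def)
        qed
      qed
      moreover have "cum (ys @ w # zs) = E (prod_list (ys @ w # zs)) - (\<Sum>\<tau>\<in>trees (Suc n) - {comb (Suc n)}. ktree cum la \<tau> (ys @ w # zs))" for w
        using cum_eq[of "ys @ w # zs"] L by (simp add: cumF_def)
      ultimately show ?thesis by simp
    qed
  qed
qed

lemma cum_lin_slot: "lfA (\<lambda>w. cum (ys @ w # zs))"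
  using cum_lin[of "length ys + length zs + 1"] by (simp add: linA_le_def)

lemma cum_leftlin: "cum (la b x # rest) = b * cum (x # rest)"
proof -
  have "leftlin_le n cum" for n
  proof (induction n)
    case 0 then show ?case by (simp add: leftlin_le_def)
  next
    case (Suc n)
    show ?case unfolding leftlin_le_def
    proof (intro allI impI)
      fix b x and rest :: "'a list" assume len: "length rest < Suc n"
      show "cum (la b x # rest) = b * cum (x # rest)"
      proof (cases "length rest < n")
        case True then show ?thesis using Suc by (simp add: leftlin_le_def)
      next
        case False
        then have L: "length rest = n" using len by simp
        have tr: "ktree cum la \<tau> (la b x # rest) = b * ktree cum la \<tau> (x # rest)"
          if t: "\<tau> \<in> trees (Suc n) - {comb (Suc n)}" for \<tau>
        proof (rule ktree_leftlin[OF Suc.IH])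
          show "\<tau> \<noteq> Lf" using t by (auto simp: trees_def)
          show "tsize \<tau> \<le> Suc n" using t by (simp add: trees_def)
          show "spl \<tau> \<le> n" using noncomb_spl[OF t] by simp
        qed
        have e: "E (prod_list (la b x # rest)) = b * E (prod_list (x # rest))"
        proof -
          have "prod_list (la b x # rest) = la b (prod_list (x # rest))" by (simp add: la_Amult)
          then show ?thesis by (simp only: E_la)
        qed
        let ?T = "trees (Suc n) - {comb (Suc n)}"
        have S: "(\<Sum>\<tau>\<in>?T. ktree cum la \<tau> (la b x # rest)) = b * (\<Sum>\<tau>\<in>?T. ktree cum la \<tau> (x # rest))"
          by (subst sum_distrib_left) (rule sum.cong[OF refl], rule tr)
        have "cum (la b x # rest) = E (prod_list (la b x # rest)) - (\<Sum>\<tau>\<in>trees (Suc n) - {comb (Suc n)}. ktree cum la \<tau> (la b x # rest))"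
          using cum_eq[of "la b x # rest"] L by (simp add: cumF_def)
        also have "\<dots> = b * (E (prod_list (x # rest)) - (\<Sum>\<tau>\<in>trees (Suc n) - {comb (Suc n)}. ktree cum la \<tau> (x # rest)))"
          by (simp only: e S right_diff_distrib)
        also have "\<dots> = b * cum (x # rest)"
          using cum_eq[of "x # rest"] L by (simp add: cumF_def)
        finally show ?thesis .
      qed
    qed
  qed
  then show ?thesis unfolding leftlin_le_def by blast
qed

end



context bp begin

lemma lfA_add_arg: "lfA T \<Longrightarrow> T (u + v) = T u + T v"
proof -
  assume "lfA T"
  then have "T (sA 1 u + v) = sB 1 (T u) + T v" by (simp add: lfA_def)
  moreover have "sA 1 u = u" using kalgA by (simp add: kalg_def)
  ultimately show ?thesis by (simp add: sB_one)
qed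

lemma lfA_zero: "lfA T \<Longrightarrow> T 0 = 0"
  using lfA_add_arg[of T 0 0] by simp

lemma lfA_sum_arg: "lfA T \<Longrightarrow> T (sum \<phi> A) = (\<Sum>i\<in>A. T (\<phi> i))"
  by (induction A rule: infinite_finite_induct) (simp_all add: lfA_zero lfA_add_arg)

definition \<beta> :: "'a list \<Rightarrow> 'a" where
  "\<beta> b = la (E (prod_list (butlast b))) (last b)"

lemma spine_sum:
  "(\<Sum>r\<in>trees (length zs). cum (P @ kblocks cum la r zs)) = (\<Sum>bs\<in>blocks zs. cum (P @ map \<beta> bs))"
proof (induction "length zs" arbitrary: zs P rule: less_induct)
  case less
  show ?case
  proof (cases zs)
    case Nil then show ?thesis by simp
  next
    case (Cons x xs)
    let ?n = "length xs"
    have "(\<Sum>r\<in>trees (length zs). cum (P @ kblocks cum la r zs))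
        = (\<Sum>j=0..?n. \<Sum>l\<in>trees j. \<Sum>r\<in>trees (?n - j). cum (P @ kblocks cum la (Nd l r) (x#xs)))"
      using Cons by (simp add: sum_trees_Suc)
    also have "\<dots> = (\<Sum>j=0..?n. \<Sum>l\<in>trees j. \<Sum>r\<in>trees (length (drop j xs)).
        cum ((P @ [la (ktree cum la l (take j (x#xs))) ((x#xs) ! j)]) @ kblocks cum la r (drop j xs)))"
    proof (intro sum.cong refl)
      fix j l r assume "l \<in> trees j"
      then have "tsize l = j" by (simp add: trees_def)
      then show "cum (P @ kblocks cum la (Nd l r) (x#xs)) = cum ((P @ [la (ktree cum la l (take j (x#xs))) ((x#xs) ! j)]) @ kblocks cum la r (drop j xs))"
        by simp
    qed simp
    also have "\<dots> = (\<Sum>j=0..?n. \<Sum>l\<in>trees j. \<Sum>bs\<in>blocks (drop j xs).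
        cum ((P @ [la (ktree cum la l (take j (x#xs))) ((x#xs) ! j)]) @ map \<beta> bs))"
      by (intro sum.cong refl less) (simp add: Cons)
    also have "\<dots> = (\<Sum>j=0..?n. \<Sum>bs\<in>blocks (drop j xs). \<Sum>l\<in>trees j.
        cum (P @ la (ktree cum la l (take j (x#xs))) ((x#xs) ! j) # map \<beta> bs))"
      by (intro sum.cong refl) (simp add: sum.swap[of _ "trees _"])
    also have "\<dots> = (\<Sum>j=0..?n. \<Sum>bs\<in>blocks (drop j xs).
        cum (P @ \<beta> (x # take j xs) # map \<beta> bs))"
    proof (intro sum.cong refl)
      fix j bs assume j: "j \<in> {0..?n}"
      have "(\<Sum>l\<in>trees j. cum (P @ la (ktree cum la l (take j (x#xs))) ((x#xs) ! j) # map \<beta> bs))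
          = cum (P @ la (\<Sum>l\<in>trees j. ktree cum la l (take j (x#xs))) ((x#xs) ! j) # map \<beta> bs)"
        using lfA_sum_arg[OF cum_lin_slot[of P "map \<beta> bs"], of "\<lambda>l. la (ktree cum la l (take j (x#xs))) ((x#xs) ! j)" "trees j"]
        by (simp add: la_sumB)
      also have "(\<Sum>l\<in>trees j. ktree cum la l (take j (x#xs))) = E (prod_list (take j (x#xs)))"
        using cum_def_eq[of "take j (x#xs)"] j by simp
      also have "la (E (prod_list (take j (x#xs)))) ((x#xs) ! j) = \<beta> (x # take j xs)"
      proof -
        have "x # take j xs = take (Suc j) (x#xs)" by simp
        moreover have tt: "take (Suc j) (x#xs) = take j (x#xs) @ [(x#xs) ! j]"
          using j by (intro take_Suc_conv_app_nth) simp
        moreover have "butlast (take (Suc j) (x#xs)) = take j (x#xs)" "last (take (Suc j) (x#xs)) = (x#xs) ! j"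
          by (simp_all only: tt butlast_snoc last_snoc)
        ultimately show ?thesis by (simp add: \<beta>_def)
      qed
      finally show "(\<Sum>l\<in>trees j. cum (P @ la (ktree cum la l (take j (x#xs))) ((x#xs) ! j) # map \<beta> bs))
          = cum (P @ \<beta> (x # take j xs) # map \<beta> bs)" .
    qed
    also have "\<dots> = (\<Sum>bs\<in>blocks zs. cum (P @ map \<beta> bs))"
      using Cons by (simp add: sum_blocks_Cons)
    finally show ?thesis .
  qed
qed

end



context bp begin

lemma mword_prod: "foldl (\<lambda>w x. ra w x * a) w0 ys = w0 * prod_list (map (\<lambda>x. la x a) ys)"
  by (induction ys arbitrary: w0) (simp_all add: ra_la mult.assoc)

lemma Mser_eq: "Mser ra E a ys = E (prod_list (a # map (\<lambda>x. la x a) ys))"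
  by (simp add: Mser_def mword_def mword_prod)

lemma Kser_eq: "Kser la E a ys = cum (a # map (\<lambda>x. la x a) ys)"
  by (simp add: Kser_def cumulants_eq)

lemma lf_h: "lfA G \<Longrightarrow> lf (\<lambda>w. G (la w a))"
  by (simp add: lf_def lfA_def la_addB la_sB)

lemma lin_Mser: "lin (Mser ra E a)"
  unfolding lin_def
proof (intro allI)
  fix xs ys :: "'b list"
  have "lfA (\<lambda>w. E (prod_list ((a # map (\<lambda>x. la x a) xs) @ w # map (\<lambda>x. la x a) ys)))"
    by (intro lfA_E_comp lfAA_prod)
  then show "lf (\<lambda>w. Mser ra E a (xs @ w # ys))"
    using lf_h by (simp add: Mser_eq)
qed

lemma lin_Kser: "lin (Kser la E a)"
  unfolding lin_def
proof (intro allI)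
  fix xs ys :: "'b list"
  have "lfA (\<lambda>w. cum ((a # map (\<lambda>x. la x a) xs) @ w # map (\<lambda>x. la x a) ys))"
    by (rule cum_lin_slot)
  then show "lf (\<lambda>w. Kser la E a (xs @ w # ys))"
    using lf_h by (simp add: Kser_eq)
qed

lemma trees_1: "trees (Suc 0) = {comb (Suc 0)}"
proof -
  have "tsize \<tau> = Suc 0 \<longleftrightarrow> \<tau> = Nd Lf Lf" for \<tau>
  proof
    assume "tsize \<tau> = Suc 0"
    then show "\<tau> = Nd Lf Lf"
    proof (cases \<tau>)
      case (Nd l r)
      then have "tsize l = 0" "tsize r = 0" using \<open>tsize \<tau> = Suc 0\<close> by auto
      then have "l = Lf" "r = Lf" by (cases l, simp_all, cases r, simp_all)
      then show ?thesis using Nd by simp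
    qed simp
  qed simp
  then show ?thesis by (auto simp: trees_def)
qed

lemma cum_single: "cum [x] = E x"
proof -
  have "E (prod_list [x]) = cum [x] + (\<Sum>\<tau>\<in>trees (length [x]) - {comb (length [x])}. ktree cum la \<tau> [x])"
    using cum_def_eq[of "[x]"] sum_trees_split[of "[x]" cum] by simp
  then show ?thesis by (simp add: trees_1)
qed

lemma K0: "Kser la E a [] = E a" by (simp add: Kser_eq cum_single)
lemma M0: "Mser ra E a [] = E a" by (simp add: Mser_eq)

lemma MK_eq:
  fixes a :: 'a
  defines "M \<equiv> Mser ra E a" and "K \<equiv> Kser la E a"
  defines "N \<equiv> (\<lambda>xs. mone xs + mprod M mI xs)"
  shows "M = mprod N (mcomp K (mprod mI N))"
proof
  fix xs :: "'b list"
  define h where "h x = la x a" for x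
  define \<Phi> where "\<Phi> = mprod mI N"
  define G where "G = mcomp K \<Phi>"
  let ?n = "length xs"
  have Mh: "M ys = E (prod_list (a # map h ys))" for ys by (simp add: M_def Mser_eq h_def[abs_def])
  have Kh: "K ys = cum (a # map h ys)" for ys by (simp add: K_def Kser_eq h_def[abs_def])
  have bh: "\<beta> (map h b) = h (\<Phi> b)" if nb: "b \<noteq> []" for b
  proof -
    obtain x c where b: "b = x # c" using nb by (cases b) auto
    have "\<beta> (map h b) = la (E (prod_list (map h (butlast b))) * last b) a"
      using nb by (simp add: \<beta>_def h_def la_mult last_map map_butlast[symmetric])
    also have "E (prod_list (map h (butlast b))) * last b = \<Phi> b"
    proof (cases "c = []")
      case True then show ?thesis using b by (simp add: \<Phi>_def N_def E_one)
    next
      case False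
      have "E (prod_list (map h (butlast b))) = x * M (butlast c)"
        using b False by (simp add: Mh h_def la_Amult[symmetric] E_la)
      then show ?thesis using b False by (simp add: \<Phi>_def N_def mprod_mI_right mult.assoc mone_def)
    qed
    finally show ?thesis by (simp add: h_def[abs_def])
  qed
  have mapb: "map \<beta> (map (map h) bss) = map h (map \<Phi> bss)" if "bss \<in> blocks ys" for bss ys
  proof -
    have "[] \<notin> set bss" using that by (simp add: blocks_def)
    then show ?thesis by (induction bss) (auto intro!: bh)
  qed
  have Gdef: "G ys = (\<Sum>bss\<in>blocks ys. cum (a # map h (map \<Phi> bss)))" for ys
    by (simp add: G_def mcomp_blocks Kh)
  have "M xs = (\<Sum>\<tau>\<in>trees (Suc ?n). ktree cum la \<tau> (a # map h xs))"
    using cum_def_eq[of "a # map h xs"] by (simp add: Mh)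
  also have "\<dots> = (\<Sum>\<tau>\<in>trees (length (a # map h xs)). cum ([] @ kblocks cum la \<tau> (a # map h xs)))"
  proof (rule sum.cong)
    fix \<tau> assume "\<tau> \<in> trees (length (a # map h xs))"
    then obtain l r where "\<tau> = Nd l r" by (cases \<tau>) (auto simp: trees_def)
    then show "ktree cum la \<tau> (a # map h xs) = cum ([] @ kblocks cum la \<tau> (a # map h xs))" by simp
  qed simp
  also have "\<dots> = (\<Sum>bs\<in>blocks (a # map h xs). cum ([] @ map \<beta> bs))" by (rule spine_sum)
  also have "\<dots> = (\<Sum>k=0..?n. \<Sum>bss\<in>blocks (drop k xs). cum (\<beta> (a # map h (take k xs)) # map \<beta> (map (map h) bss)))"
    by (simp add: sum_blocks_Cons drop_map take_map sum_blocks_map)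
  also have "\<dots> = (\<Sum>k=0..?n. N (take k xs) * G (drop k xs))"
  proof (rule sum.cong[OF refl])
    fix k assume k: "k \<in> {0..?n}"
    have "(\<Sum>bss\<in>blocks (drop k xs). cum (\<beta> (a # map h (take k xs)) # map \<beta> (map (map h) bss)))
       = (\<Sum>bss\<in>blocks (drop k xs). cum (\<beta> (a # map h (take k xs)) # map h (map \<Phi> bss)))"
      by (rule sum.cong[OF refl]) (simp only: mapb)
    also have "\<dots> = N (take k xs) * G (drop k xs)"
    proof (cases "k = 0")
      case True
      have "\<beta> [a] = a" by (simp add: \<beta>_def E_one la_one)
      then show ?thesis using True by (simp add: N_def Gdef)
    next
      case False
      let ?c = "take k xs"
      have c: "?c \<noteq> []" using k False by (cases xs) auto
      have "\<beta> (a # map h ?c) = la (M (butlast ?c) * last ?c) a"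
        using c by (simp add: \<beta>_def Mh map_butlast[symmetric] last_map h_def la_mult)
      then have "\<beta> (a # map h ?c) = la (N ?c) a"
        using c by (simp add: N_def mprod_mI_right mone_def)
      then show ?thesis
        by (simp add: cum_leftlin Gdef sum_distrib_left)
    qed
    finally show "(\<Sum>bss\<in>blocks (drop k xs). cum (\<beta> (a # map h (take k xs)) # map \<beta> (map (map h) bss))) = N (take k xs) * G (drop k xs)" .
  qed
  also have "\<dots> = mprod N (mcomp K (mprod mI N)) xs"
    by (simp add: mprod_def G_def \<Phi>_def)
  finally show "M xs = mprod N (mcomp K (mprod mI N)) xs" .
qed

end



theorem lemma4:
  fixes sB :: "'k::field_char_0 \<Rightarrow> 'b::ring_1 \<Rightarrow> 'b"
    and sA :: "'k \<Rightarrow> 'a::ring_1 \<Rightarrow> 'a"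
    and la :: "'b \<Rightarrow> 'a \<Rightarrow> 'a" and ra :: "'a \<Rightarrow> 'b \<Rightarrow> 'a"
    and E :: "'a \<Rightarrow> 'b" and a :: 'a
  assumes "bprob_space sB sA la ra E"
    and "bunit (E a)"
  shows "mprod (mprod (minv sB (Sa sB la E a)) mI) (Sa sB la E a)
           = mcomp (mprod (Kser la E a) mI) (mcinv sB (mprod mI (Kser la E a)))
       \<and> mcomp (mprod (Kser la E a) mI) (mcinv sB (mprod mI (Kser la E a)))
           = mcomp (mprod (Mser ra E a) mI) (mcinv sB (mprod mI (Mser ra E a)))"
proof -
  interpret bp sB sA la ra E by unfold_locales (rule assms(1))
  have K: "lin (Kser la E a)" by (rule lin_Kser)
  have uK: "bunit (Kser la E a [])" using assms(2) by (simp add: K0)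
  have M: "lin (Mser ra E a)" by (rule lin_Mser)
  have uM: "bunit (Mser ra E a [])" using assms(2) by (simp add: M0)
  have Sa: "Sa sB la E a = Strans sB (mprod mI (Kser la E a))" by (simp add: Sa_def kser_def)
  show ?thesis
  proof (rule conjI)
    show "mprod (mprod (minv sB (Sa sB la E a)) mI) (Sa sB la E a)
           = mcomp (mprod (Kser la E a) mI) (mcinv sB (mprod mI (Kser la E a)))"
      unfolding Sa by (rule part1[OF K uK])
    show "mcomp (mprod (Kser la E a) mI) (mcinv sB (mprod mI (Kser la E a)))
           = mcomp (mprod (Mser ra E a) mI) (mcinv sB (mprod mI (Mser ra E a)))"
      by (rule part2[OF K uK M uM refl MK_eq])
  qed
qed


end
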